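(* Let $(\mathcal G,(\cdot,\cdot),\mathcal H)$ be a generalized reductive Lie algebra and fix $i$, with $\mathcal V_i$, $\bar{\mathcal V}_i$ and $(\cdot,\cdot)_i$ as in the context. Then (i) the symmetric bilinear form $(\cdot,\cdot)_i$ on $\bar{\mathcal V}_i$ is positive definite; (ii) the symmetric bilinear form $(\cdot,\cdot)_i$ on $\mathcal V_i$ is positive semidefinite.
   Context: GRLA: $\mathcal G$ complex Lie algebra, $\mathcal H$ subalgebra, $(\cdot,\cdot)$ bilinear form with (GR1) form symmetric, nondegenerate, invariant; (GR2) $\mathcal H$ nontrivial finite-dimensional abelian, self-centralizing, $\mathrm{ad}(h)$ diagonalizable; root spaces $\mathcal G_\alpha$, root system $R=\{\alpha\in\mathcal H^*:\mathcal G_\alpha\ne0\}$; $t_\alpha\in\mathcal H$ with $(t_\alpha,h)=\alpha(h)$, $(\alpha,\beta):=(t_\alpha,t_\beta)$; $R^\times=\{\alpha\in R:(\alpha,\alpha)\neq0\}$, $R^0=R\setminus R^\times$; (GR3) $\mathrm{ad}(x)$ locally nilpotent for $x\in\mathcal G_\alpha$, $\alpha\in R^\times$; (GR4) $R$ discrete; (GR5) $R^\times\ne\emptyset$. Partition $R^\times=\bigcup_iR_i^\times$ into the classes of the equivalence relation: $\alpha\sim\beta$ iff there is a chain $\alpha=\alpha_0,\dots,\alpha_t=\beta$ in $R^\times$ with $(\alpha_s,\alpha_{s+1})\ne0$. Let $\mathcal V$ be the real span of $R$, $\mathcal V_i$ the real span of $R_i^\times$, $\mathcal V^0=\{v\in\mathcal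 V:(v,\mathcal V)=0\}$, $\bar{\ }:\mathcal V\to\mathcal V/\mathcal V^0$, and $\bar{\mathcal V}_i$ the image of $\mathcal V_i$. Let $c_i\in\mathbb C\setminus\{0\}$ be such that $(\cdot,\cdot)_i:=c_i(\cdot,\cdot)$ is real valued on $\mathcal V_i$ and $(\gamma,\gamma)_i>0$ for some $\gamma\in R_i^\times$ (such $c_i$ exist). On $\bar{\mathcal V}_i$ set $(\bar\alpha,\bar\beta)_i:=(\alpha,\beta)_i$, which is well defined. *)

theory Defs
  imports Complex_Main
begin

definition lie_algebra ::
  "(complex \<Rightarrow> 'g::ab_group_add \<Rightarrow> 'g) \<Rightarrow> ('g \<Rightarrow> 'g \<Rightarrow> 'g) \<Rightarrow> bool" where
  "lie_algebra sc br \<longleftrightarrow>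
     vector_space sc \<and>
     (\<forall>a x y z. br (sc a x + y) z = sc a (br x z) + br y z) \<and>
     (\<forall>a x y z. br z (sc a x + y) = sc a (br z x) + br z y) \<and>
     (\<forall>x. br x x = 0) \<and>
     (\<forall>x y z. br x (br y z) + br y (br z x) + br z (br x y) = 0)"

text \<open>Elements of H^*: complex-linear functionals on H, normalised to be 0 off H.\<close>
definition dual_elem ::
  "(complex \<Rightarrow> 'g::ab_group_add \<Rightarrow> 'g) \<Rightarrow> 'g set \<Rightarrow> ('g \<Rightarrow> complex) \<Rightarrow> bool" where
  "dual_elem sc H \<alpha> \<longleftrightarrow>
     (\<forall>h1\<in>H. \<forall>h2\<in>H. \<forall>a. \<alpha> (sc a h1 + h2) = a * \<alpha> h1 + \<alpha> h2) \<and>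
     (\<forall>x. x \<notin> H \<longrightarrow> \<alpha> x = 0)"

definition root_space ::
  "(complex \<Rightarrow> 'g::ab_group_add \<Rightarrow> 'g) \<Rightarrow> ('g \<Rightarrow> 'g \<Rightarrow> 'g) \<Rightarrow> 'g set \<Rightarrow> ('g \<Rightarrow> complex) \<Rightarrow> 'g set" where
  "root_space sc br H \<alpha> = {x. \<forall>h\<in>H. br h x = sc (\<alpha> h) x}"

definition roots ::
  "(complex \<Rightarrow> 'g::ab_group_add \<Rightarrow> 'g) \<Rightarrow> ('g \<Rightarrow> 'g \<Rightarrow> 'g) \<Rightarrow> 'g set \<Rightarrow> ('g \<Rightarrow> complex) set" where
  "roots sc br H = {\<alpha>. dual_elem sc H \<alpha> \<and> root_space sc br H \<alpha> \<noteq> {0}}"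

definition tvec :: "('g \<Rightarrow> 'g \<Rightarrow> complex) \<Rightarrow> 'g set \<Rightarrow> ('g \<Rightarrow> complex) \<Rightarrow> 'g" where
  "tvec B H \<alpha> = (THE t. t \<in> H \<and> (\<forall>h\<in>H. B t h = \<alpha> h))"

definition rform :: "('g \<Rightarrow> 'g \<Rightarrow> complex) \<Rightarrow> 'g set \<Rightarrow> ('g \<Rightarrow> complex) \<Rightarrow> ('g \<Rightarrow> complex) \<Rightarrow> complex" where
  "rform B H \<alpha> \<beta> = B (tvec B H \<alpha>) (tvec B H \<beta>)"

definition nonisotropic_roots ::
  "(complex \<Rightarrow> 'g::ab_group_add \<Rightarrow> 'g) \<Rightarrow> ('g \<Rightarrow> 'g \<Rightarrow> 'g) \<Rightarrow> ('g \<Rightarrow> 'g \<Rightarrow> complex) \<Rightarrow> 'g set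
    \<Rightarrow> ('g \<Rightarrow> complex) set" where
  "nonisotropic_roots sc br B H = {\<alpha> \<in> roots sc br H. rform B H \<alpha> \<alpha> \<noteq> 0}"

definition grla ::
  "(complex \<Rightarrow> 'g::ab_group_add \<Rightarrow> 'g) \<Rightarrow> ('g \<Rightarrow> 'g \<Rightarrow> 'g) \<Rightarrow> ('g \<Rightarrow> 'g \<Rightarrow> complex) \<Rightarrow> 'g set \<Rightarrow> bool" where
  "grla sc br B H \<longleftrightarrow>
     lie_algebra sc br \<and>
     \<comment> \<open>H is a subalgebra\<close>
     module.subspace sc H \<and> (\<forall>h\<in>H. \<forall>k\<in>H. br h k \<in> H) \<and>
     \<comment> \<open>(GR1) B symmetric, bilinear, nondegenerate, invariant\<close>
     (\<forall>x y. B x y = B y x) \<and>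
     (\<forall>a x y z. B (sc a x + y) z = a * B x z + B y z) \<and>
     (\<forall>x. (\<forall>y. B x y = 0) \<longrightarrow> x = 0) \<and>
     (\<forall>x y z. B (br x y) z = B x (br y z)) \<and>
     \<comment> \<open>(GR2) H nontrivial, finite-dimensional, abelian, self-centralizing, ad H diagonalizable\<close>
     H \<noteq> {0} \<and>
     (\<exists>S. finite S \<and> S \<subseteq> H \<and> module.span sc S = H) \<and>
     (\<forall>h\<in>H. \<forall>k\<in>H. br h k = 0) \<and>
     {x. \<forall>h\<in>H. br h x = 0} = H \<and>
     (\<forall>x. \<exists>F f. finite F \<and> F \<subseteq> {\<alpha>. dual_elem sc H \<alpha>} \<and>
                 (\<forall>\<alpha>\<in>F. f \<alpha> \<in> root_space sc br H \<alpha>) \<and> x = sum f F) \<and>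
     \<comment> \<open>(GR3) ad x locally nilpotent for root vectors of nonisotropic roots\<close>
     (\<forall>\<alpha>\<in>nonisotropic_roots sc br B H. \<forall>x\<in>root_space sc br H \<alpha>.
         \<forall>y. \<exists>n. (br x ^^ n) y = 0) \<and>
     \<comment> \<open>(GR4) R discrete in H^* (the topology of pointwise convergence on H,
         which coincides with the norm topology since H is finite-dimensional)\<close>
     (\<forall>\<alpha>\<in>roots sc br H. \<exists>F e. finite F \<and> F \<subseteq> H \<and> e > 0 \<and>
         (\<forall>\<beta>\<in>roots sc br H. (\<forall>h\<in>F. cmod (\<beta> h - \<alpha> h) < e) \<longrightarrow> \<beta> = \<alpha>)) \<and>
     \<comment> \<open>(GR5)\<close>
     nonisotropic_roots sc br B H \<noteq> {}"

definition real_span :: "('g \<Rightarrow> complex) set \<Rightarrow> ('g \<Rightarrow> complex) set" where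
  "real_span S = {(\<lambda>x. \<Sum>\<beta>\<in>F. complex_of_real (c \<beta>) * \<beta> x) | F c. finite F \<and> F \<subseteq> S}"

text \<open>The equivalence class R_i^x of a nonisotropic root alpha0 (connectedness
via chains of non-orthogonal nonisotropic roots).\<close>
definition root_class ::
  "(complex \<Rightarrow> 'g::ab_group_add \<Rightarrow> 'g) \<Rightarrow> ('g \<Rightarrow> 'g \<Rightarrow> 'g) \<Rightarrow> ('g \<Rightarrow> 'g \<Rightarrow> complex) \<Rightarrow> 'g set
    \<Rightarrow> ('g \<Rightarrow> complex) \<Rightarrow> ('g \<Rightarrow> complex) set" where
  "root_class sc br B H \<alpha>0 =
     {\<beta> \<in> nonisotropic_roots sc br B H.
        (\<lambda>a b. a \<in> nonisotropic_roots sc br B H \<and> b \<in> nonisotropic_roots sc br B H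
               \<and> rform B H a b \<noteq> 0)\<^sup>*\<^sup>* \<alpha>0 \<beta>}"

definition radical ::
  "(complex \<Rightarrow> 'g::ab_group_add \<Rightarrow> 'g) \<Rightarrow> ('g \<Rightarrow> 'g \<Rightarrow> 'g) \<Rightarrow> ('g \<Rightarrow> 'g \<Rightarrow> complex) \<Rightarrow> 'g set
    \<Rightarrow> ('g \<Rightarrow> complex) set" where
  "radical sc br B H = {v \<in> real_span (roots sc br H).
      \<forall>w\<in>real_span (roots sc br H). rform B H v w = 0}"

end

theory Submission
  imports Defs "HOL-Library.Multiset"
begin

locale G =
  fixes sc :: "complex \<Rightarrow> 'g::ab_group_add \<Rightarrow> 'g"
    and br :: "'g \<Rightarrow> 'g \<Rightarrow> 'g"
    and B :: "'g \<Rightarrow> 'g \<Rightarrow> complex"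
    and H :: "'g set"
  assumes grla: "grla sc br B H"
begin

lemma vs: "vector_space sc" using grla by (simp add: grla_def lie_algebra_def)

sublocale V: vector_space sc by (rule vs)

lemma brL: "br (sc a x + y) z = sc a (br x z) + br y z" using grla by (simp add: grla_def lie_algebra_def)
lemma brR: "br z (sc a x + y) = sc a (br z x) + br z y" using grla by (simp add: grla_def lie_algebra_def)
lemma br_self: "br x x = 0" using grla by (simp add: grla_def lie_algebra_def)
lemma jacobi: "br x (br y z) + br y (br z x) + br z (br x y) = 0" using grla by (simp add: grla_def lie_algebra_def)
lemma Bsym: "B x y = B y x" using grla unfolding grla_def by meson
lemma BL: "B (sc a x + y) z = a * B x z + B y z" using grla unfolding grla_def by meson
lemma Bnd: "(\<And>y. B x y = 0) \<Longrightarrow> x = 0" using grla unfolding grla_def by meson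
lemma Binv: "B (br x y) z = B x (br y z)" using grla unfolding grla_def by meson
lemma Hsub: "module.subspace sc H" using grla unfolding grla_def by meson
lemma Hab: "h \<in> H \<Longrightarrow> k \<in> H \<Longrightarrow> br h k = 0" using grla unfolding grla_def by meson
lemma Hcent: "{x. \<forall>h\<in>H. br h x = 0} = H" using grla unfolding grla_def by meson
lemma decomp: "\<exists>F f. finite F \<and> F \<subseteq> {\<alpha>. dual_elem sc H \<alpha>} \<and>
                 (\<forall>\<alpha>\<in>F. f \<alpha> \<in> root_space sc br H \<alpha>) \<and> x = sum f F"
  using grla unfolding grla_def by meson
lemma GR3: "\<alpha> \<in> nonisotropic_roots sc br B H \<Longrightarrow> x \<in> root_space sc br H \<alpha> \<Longrightarrow> \<exists>n. (br x ^^ n) y = 0"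
  using grla unfolding grla_def by meson

lemma H0: "0 \<in> H" using Hsub V.subspace_0 by blast
lemma Hadd: "x \<in> H \<Longrightarrow> y \<in> H \<Longrightarrow> x + y \<in> H" using Hsub V.subspace_add by blast
lemma Hsc: "x \<in> H \<Longrightarrow> sc a x \<in> H" using Hsub V.subspace_scale by blast
lemma Hneg: "x \<in> H \<Longrightarrow> - x \<in> H" using Hsub V.subspace_neg by blast
lemma Hdiff: "x \<in> H \<Longrightarrow> y \<in> H \<Longrightarrow> x - y \<in> H" using Hsub V.subspace_diff by blast

lemma brL_add: "br (x + y) z = br x z + br y z" using brL[of 1 x y z] by simp
lemma brR_add: "br z (x + y) = br z x + br z y" using brR[of z 1 x y] by simp
lemma brL_sc: "br (sc a x) z = sc a (br x z)" using brL[of a x 0 z] brL_add[of 0 0 z] by simp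
lemma brR_sc: "br z (sc a x) = sc a (br z x)" using brR[of z a x 0] brR_add[of z 0 0] by simp
lemma brL0[simp]: "br 0 z = 0" using brL_add[of 0 0 z] by simp
lemma brR0[simp]: "br z 0 = 0" using brR_add[of z 0 0] by simp
lemma brL_neg: "br (- x) z = - br x z" using brL_add[of x "-x" z] by (simp add: eq_neg_iff_add_eq_0 add.commute)
lemma brR_neg: "br z (- x) = - br z x" using brR_add[of z x "-x"] by (simp add: eq_neg_iff_add_eq_0 add.commute)
lemma brL_diff: "br (x - y) z = br x z - br y z" using brL_add[of x "-y" z] brL_neg by simp
lemma brR_diff: "br z (x - y) = br z x - br z y" using brR_add[of z x "-y"] brR_neg by simp
lemma anti: "br x y = - br y x"
proof -
  have "br (x+y) (x+y) = 0" by (rule br_self)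
  hence "br x x + br x y + (br y x + br y y) = 0" by (simp add: brL_add brR_add add_ac)
  hence "br x y + br y x = 0" by (simp only: br_self add_0_left add_0_right)
  thus ?thesis by (simp add: eq_neg_iff_add_eq_0)
qed
lemma jac2: "br x (br y z) = br (br x y) z + br y (br x z)"
proof -
  have "br x (br y z) + br y (br z x) + br z (br x y) = 0" by (rule jacobi)
  moreover have "br y (br z x) = - br y (br x z)" by (metis anti brR_neg)
  moreover have "br z (br x y) = - br (br x y) z" by (rule anti)
  ultimately show ?thesis by (simp add: algebra_simps eq_neg_iff_add_eq_0)
qed

lemma BR: "B z (sc a x + y) = a * B z x + B z y" using BL Bsym by metis
lemma BL_add: "B (x + y) z = B x z + B y z" using BL[of 1 x y z] by simp
lemma BR_add: "B z (x + y) = B z x + B z y" using BR[of z 1 x y] by simp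
lemma BL_sc: "B (sc a x) z = a * B x z" using BL[of a x 0 z] BL_add[of 0 0 z] by simp
lemma BR_sc: "B z (sc a x) = a * B z x" using BR[of z a x 0] BR_add[of z 0 0] by simp
lemma BL0[simp]: "B 0 z = 0" using BL_add[of 0 0 z] by simp
lemma BR0[simp]: "B z 0 = 0" using BR_add[of z 0 0] by simp
lemma BL_neg: "B (- x) z = - B x z" using BL_add[of x "-x" z] by (simp add: eq_neg_iff_add_eq_0 add.commute)
lemma BL_diff: "B (x - y) z = B x z - B y z" using BL_add[of x "-y" z] BL_neg by simp
lemma BR_sum: "finite F \<Longrightarrow> B z (sum f F) = (\<Sum>a\<in>F. B z (f a))"
  by (induct F rule: finite_induct) (auto simp: BR_add)
lemma BL_sum: "finite F \<Longrightarrow> B (sum f F) z = (\<Sum>a\<in>F. B (f a) z)"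
  by (induct F rule: finite_induct) (auto simp: BL_add)

end

context G begin

abbreviation "RS \<equiv> root_space sc br H"
abbreviation "R \<equiv> roots sc br H"
abbreviation "Rx \<equiv> nonisotropic_roots sc br B H"
abbreviation "rf \<equiv> rform B H"
abbreviation "tv \<equiv> tvec B H"
abbreviation "DE \<equiv> dual_elem sc H"

lemma RS_iff: "x \<in> RS \<alpha> \<longleftrightarrow> (\<forall>h\<in>H. br h x = sc (\<alpha> h) x)"
  by (simp add: root_space_def)

lemma RS_zero: "0 \<in> RS \<alpha>" by (simp add: RS_iff)
lemma RS_sc: "x \<in> RS \<alpha> \<Longrightarrow> sc a x \<in> RS \<alpha>"
  by (simp add: RS_iff brR_sc V.scale_left_commute)

lemma RS_br: assumes "x \<in> RS \<alpha>" "y \<in> RS \<beta>" shows "br x y \<in> RS (\<lambda>z. \<alpha> z + \<beta> z)"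
  unfolding RS_iff
proof
  fix h assume h: "h \<in> H"
  have "br h (br x y) = br (br h x) y + br x (br h y)" by (rule jac2)
  also have "\<dots> = sc (\<alpha> h) (br x y) + sc (\<beta> h) (br x y)"
    using assms h by (simp add: RS_iff brL_sc brR_sc)
  also have "\<dots> = sc (\<alpha> h + \<beta> h) (br x y)" by (simp add: V.scale_left_distrib)
  finally show "br h (br x y) = sc (\<alpha> h + \<beta> h) (br x y)" .
qed

lemma RS0: "RS (\<lambda>_. 0) = H"
  using Hcent by (auto simp: RS_iff)

lemma H_RS0: "h \<in> H \<Longrightarrow> h \<in> RS (\<lambda>_. 0)" using RS0 by simp

lemma B_RS: assumes "x \<in> RS \<alpha>" "y \<in> RS \<beta>" "h \<in> H" shows "(\<alpha> h + \<beta> h) * B x y = 0"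
proof -
  have "\<alpha> h * B x y = B (br h x) y" using assms by (simp add: RS_iff BL_sc)
  also have "\<dots> = - B (br x h) y" by (metis anti BL_neg)
  also have "\<dots> = - B x (br h y)" by (simp add: Binv)
  also have "\<dots> = - (\<beta> h * B x y)" using assms by (simp add: RS_iff BR_sc)
  finally show ?thesis by (simp add: algebra_simps)
qed

lemma DE_off: "DE \<alpha> \<Longrightarrow> x \<notin> H \<Longrightarrow> \<alpha> x = 0" by (simp add: dual_elem_def)
lemma DE_lin: "DE \<alpha> \<Longrightarrow> h1 \<in> H \<Longrightarrow> h2 \<in> H \<Longrightarrow> \<alpha> (sc a h1 + h2) = a * \<alpha> h1 + \<alpha> h2"
  by (simp add: dual_elem_def)
lemma DE_eq: assumes "DE \<alpha>" "DE \<beta>" "\<forall>h\<in>H. \<alpha> h = \<beta> h" shows "\<alpha> = \<beta>"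
proof
  fix x show "\<alpha> x = \<beta> x" using assms by (cases "x \<in> H") (auto simp: dual_elem_def)
qed
lemma DE_comb: assumes "DE \<alpha>" "DE \<beta>" shows "DE (\<lambda>x. a * \<alpha> x + b * \<beta> x)"
  using assms unfolding dual_elem_def by (auto simp: algebra_simps)
lemma DE_zero: "DE (\<lambda>_. 0)" by (simp add: dual_elem_def)
lemma DE_sc: assumes "DE \<alpha>" shows "DE (\<lambda>x. a * \<alpha> x)"
  using DE_comb[OF assms DE_zero, of a 0] by simp
lemma DE_add: assumes "DE \<alpha>" "DE \<beta>" shows "DE (\<lambda>x. \<alpha> x + \<beta> x)"
  using DE_comb[OF assms, of 1 1] by simp
lemma DE_neg: assumes "DE \<alpha>" shows "DE (\<lambda>x. - \<alpha> x)"
  using DE_sc[OF assms, of "-1"] by simp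
lemma DE_diff: assumes "DE \<alpha>" "DE \<beta>" shows "DE (\<lambda>x. \<alpha> x - \<beta> x)"
  using DE_comb[OF assms, of 1 "-1"] by simp

lemma DE_H0: "DE \<alpha> \<Longrightarrow> \<alpha> 0 = 0"
  using DE_lin[OF _ H0 H0, of \<alpha> 1] by simp

lemma Hnd: assumes h: "h \<in> H" and hz: "\<forall>k\<in>H. B h k = 0" shows "h = 0"
proof (rule Bnd)
  fix y
  obtain F f where F: "finite F" "F \<subseteq> {\<alpha>. DE \<alpha>}" "\<forall>\<alpha>\<in>F. f \<alpha> \<in> RS \<alpha>" "y = sum f F"
    using decomp[of y] by blast
  have "B h (f \<gamma>) = 0" if g: "\<gamma> \<in> F" for \<gamma>
  proof (cases "\<forall>h'\<in>H. \<gamma> h' = 0")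
    case True
    have "\<gamma> = (\<lambda>_. 0)" using DE_eq[of \<gamma> "\<lambda>_. 0"] True F g DE_zero by auto
    hence "f \<gamma> \<in> H" using F g RS0 by auto
    thus ?thesis using hz by simp
  next
    case False
    then obtain h' where "h' \<in> H" "\<gamma> h' \<noteq> 0" by auto
    moreover have "(0 + \<gamma> h') * B h (f \<gamma>) = 0"
      using B_RS[OF H_RS0[OF h], of "f \<gamma>" \<gamma> h'] F g \<open>h' \<in> H\<close> by auto
    ultimately show ?thesis by simp
  qed
  thus "B h y = 0" using F by (simp add: BR_sum)
qed

definition "has_t u \<longleftrightarrow> (\<exists>t\<in>H. \<forall>h\<in>H. B t h = u h)"

lemma t_unique: assumes "t \<in> H" "\<forall>h\<in>H. B t h = u h" "t' \<in> H" "\<forall>h\<in>H. B t' h = u h"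
  shows "t = t'"
proof -
  have "t - t' = 0" by (rule Hnd) (use assms in \<open>auto simp: Hdiff BL_diff\<close>)
  thus ?thesis by simp
qed

lemma tvec_eq: assumes "t \<in> H" "\<forall>h\<in>H. B t h = u h" shows "tv u = t"
  unfolding tvec_def
  by (rule the_equality) (use assms t_unique in auto)

lemma tvec_H: "has_t u \<Longrightarrow> tv u \<in> H"
  unfolding has_t_def using tvec_eq by metis
lemma tvec_B: "has_t u \<Longrightarrow> h \<in> H \<Longrightarrow> B (tv u) h = u h"
  unfolding has_t_def using tvec_eq by metis

lemma has_t_comb: assumes "has_t u" "has_t w"
  shows "has_t (\<lambda>x. a * u x + w x)" "tv (\<lambda>x. a * u x + w x) = sc a (tv u) + tv w"
proof -
  have 1: "sc a (tv u) + tv w \<in> H" using assms by (simp add: Hadd Hsc tvec_H)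
  have 2: "\<forall>h\<in>H. B (sc a (tv u) + tv w) h = a * u h + w h" using assms by (simp add: BL tvec_B)
  show "has_t (\<lambda>x. a * u x + w x)" unfolding has_t_def using 1 2 by blast
  show "tv (\<lambda>x. a * u x + w x) = sc a (tv u) + tv w" using tvec_eq[OF 1, of "\<lambda>x. a * u x + w x"] 2 by simp
qed

lemma has_t_zero: "has_t (\<lambda>_. 0)" "tv (\<lambda>_. 0) = 0"
proof -
  show "has_t (\<lambda>_. 0)" unfolding has_t_def using H0 by (intro bexI[of _ 0]) auto
  show "tv (\<lambda>_. 0) = 0" using tvec_eq[of 0 "\<lambda>_. 0"] H0 by auto
qed

lemma has_t_sc: assumes "has_t u" shows "has_t (\<lambda>x. a * u x)" "tv (\<lambda>x. a * u x) = sc a (tv u)"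
  using has_t_comb[OF assms has_t_zero(1), of a] has_t_zero(2) by simp_all
lemma has_t_add: assumes "has_t u" "has_t w" shows "has_t (\<lambda>x. u x + w x)" "tv (\<lambda>x. u x + w x) = tv u + tv w"
  using has_t_comb[OF assms, of 1] by simp_all
lemma has_t_neg: assumes "has_t u" shows "has_t (\<lambda>x. - u x)" "tv (\<lambda>x. - u x) = - tv u"
  using has_t_sc[OF assms, of "-1"] by simp_all
lemma has_t_diff: assumes "has_t u" "has_t w" shows "has_t (\<lambda>x. u x - w x)" "tv (\<lambda>x. u x - w x) = tv u - tv w"
  using has_t_add[OF assms(1) has_t_neg(1)[OF assms(2)]] has_t_neg(2)[OF assms(2)] by simp_all

lemma has_t_sum: assumes "finite F" "\<forall>\<beta>\<in>F. has_t \<beta>"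
  shows "has_t (\<lambda>x. \<Sum>\<beta>\<in>F. a \<beta> * \<beta> x)"
  using assms
proof (induct F rule: finite_induct)
  case empty then show ?case using has_t_zero(1) by simp
next
  case (insert b F)
  have "has_t b" "has_t (\<lambda>x. \<Sum>\<beta>\<in>F. a \<beta> * \<beta> x)" using insert by auto
  from has_t_comb(1)[OF this, of "a b"] show ?case using insert(1,2) by (simp add: sum.insert)
qed

lemma rf_def2: "rf u w = B (tv u) (tv w)" by (simp add: rform_def)
lemma rf_sym: "rf u w = rf w u" unfolding rform_def by (rule Bsym)
lemma rf_app: "has_t u \<Longrightarrow> has_t w \<Longrightarrow> rf u w = u (tv w)"
  unfolding rform_def by (simp add: tvec_B tvec_H)
lemma rf_app2: "has_t u \<Longrightarrow> has_t w \<Longrightarrow> rf u w = w (tv u)"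
  using rf_app rf_sym by metis

end

context G begin

lemma BR_neg: "B z (- x) = - B z x" using BL_neg Bsym by metis
lemma BR_diff: "B z (x - y) = B z x - B z y" using BL_diff Bsym by metis

lemma root_iff: "\<alpha> \<in> R \<longleftrightarrow> DE \<alpha> \<and> (\<exists>x\<in>RS \<alpha>. x \<noteq> 0)"
  unfolding roots_def using RS_zero by auto

lemma Rx_iff: "\<alpha> \<in> Rx \<longleftrightarrow> \<alpha> \<in> R \<and> rf \<alpha> \<alpha> \<noteq> 0"
  by (simp add: nonisotropic_roots_def)

lemma DE_smul: "DE \<beta> \<Longrightarrow> h \<in> H \<Longrightarrow> \<beta> (sc a h) = a * \<beta> h"
  using DE_lin[of \<beta> h 0 a] H0 DE_H0 by simp

lemma root_pair: assumes "\<alpha> \<in> R" "e \<in> RS \<alpha>" "e \<noteq> 0"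
  shows "\<exists>f\<in>RS (\<lambda>x. - \<alpha> x). B e f \<noteq> 0"
proof -
  obtain y where y: "B e y \<noteq> 0" using Bnd assms(3) by blast
  obtain F f where F: "finite F" "F \<subseteq> {\<alpha>. DE \<alpha>}" "\<forall>\<alpha>\<in>F. f \<alpha> \<in> RS \<alpha>" "y = sum f F"
    using decomp[of y] by blast
  have "(\<Sum>\<gamma>\<in>F. B e (f \<gamma>)) \<noteq> 0" using y F by (simp add: BR_sum)
  then obtain \<gamma> where g: "\<gamma> \<in> F" "B e (f \<gamma>) \<noteq> 0" using sum.neutral[of F "\<lambda>\<gamma>. B e (f \<gamma>)"] by blast
  have "\<forall>h\<in>H. \<gamma> h = - \<alpha> h"
  proof
    fix h assume "h \<in> H"
    have fg: "f \<gamma> \<in> RS \<gamma>" using F(3) g(1) by blast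
    have "(\<alpha> h + \<gamma> h) * B e (f \<gamma>) = 0" by (rule B_RS[OF assms(2) fg \<open>h \<in> H\<close>])
    hence "\<alpha> h + \<gamma> h = 0" using g(2) by simp
    thus "\<gamma> h = - \<alpha> h" by (simp only: add_eq_0_iff)
  qed
  moreover have "DE \<gamma>" using F g by auto
  moreover have "DE (\<lambda>x. - \<alpha> x)" using assms DE_neg root_iff by blast
  ultimately have "\<gamma> = (\<lambda>x. - \<alpha> x)" using DE_eq[of \<gamma> "\<lambda>x. - \<alpha> x"] by auto
  thus ?thesis using F g by auto
qed

lemma neg_root: assumes "\<alpha> \<in> R" shows "(\<lambda>x. - \<alpha> x) \<in> R"
proof -
  obtain e where e: "e \<in> RS \<alpha>" "e \<noteq> 0" using assms root_iff by auto
  obtain f where f: "f \<in> RS (\<lambda>x. - \<alpha> x)" "B e f \<noteq> 0" using root_pair assms e by blast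
  have "f \<noteq> 0" using f by auto
  moreover have "DE (\<lambda>x. - \<alpha> x)" using assms DE_neg root_iff by blast
  ultimately show ?thesis using f root_iff by blast
qed

lemma bracket_pair: assumes "\<alpha> \<in> R" "e \<in> RS \<alpha>" "f \<in> RS (\<lambda>x. - \<alpha> x)"
  shows "br e f \<in> H" "\<forall>h\<in>H. B (br e f) h = B e f * \<alpha> h"
proof -
  have "(\<lambda>z. \<alpha> z + - \<alpha> z) = (\<lambda>_. 0)" by auto
  hence "br e f \<in> RS (\<lambda>_. 0)" using RS_br[OF assms(2,3)] by simp
  thus "br e f \<in> H" using RS0 by simp
  show "\<forall>h\<in>H. B (br e f) h = B e f * \<alpha> h"
  proof
    fix h assume h: "h \<in> H"
    have "B (br e f) h = B e (br f h)" by (rule Binv)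
    also have "br f h = - br h f" by (rule anti)
    also have "br h f = sc (- \<alpha> h) f" using assms h by (simp add: RS_iff)
    finally show "B (br e f) h = B e f * \<alpha> h" using BR_sc[of e] by (simp add: BR_neg)
  qed
qed

end

context G begin

lemma bracket_tv: assumes "\<alpha> \<in> R" "has_t \<alpha>" "e \<in> RS \<alpha>" "f \<in> RS (\<lambda>x. - \<alpha> x)"
  shows "br e f = sc (B e f) (tv \<alpha>)"
proof (rule t_unique)
  show "br e f \<in> H" using bracket_pair[OF assms(1,3,4)] by blast
  show "\<forall>h\<in>H. B (br e f) h = B e f * \<alpha> h" using bracket_pair[OF assms(1,3,4)] by blast
  show "sc (B e f) (tv \<alpha>) \<in> H" using Hsc tvec_H assms(2) by blast
  show "\<forall>h\<in>H. B (sc (B e f) (tv \<alpha>)) h = B e f * \<alpha> h" using tvec_B assms(2) by (simp add: BL_sc)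
qed

lemma root_has_t: assumes "\<alpha> \<in> R" shows "has_t \<alpha>"
proof -
  obtain e where e: "e \<in> RS \<alpha>" "e \<noteq> 0" using assms root_iff by auto
  obtain f where f: "f \<in> RS (\<lambda>x. - \<alpha> x)" "B e f \<noteq> 0" using root_pair assms e by blast
  have 1: "br e f \<in> H" "\<forall>h\<in>H. B (br e f) h = B e f * \<alpha> h" using bracket_pair[OF assms e(1) f(1)] by auto
  have "sc (1 / B e f) (br e f) \<in> H" using 1 Hsc by blast
  moreover have "\<forall>h\<in>H. B (sc (1 / B e f) (br e f)) h = \<alpha> h" using 1 f(2) by (simp add: BL_sc)
  ultimately show ?thesis unfolding has_t_def by blast
qed

lemma neg_has: assumes "has_t \<alpha>" shows "rf (\<lambda>x. - \<alpha> x) (\<lambda>x. - \<alpha> x) = rf \<alpha> \<alpha>"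
  unfolding rform_def using has_t_neg(2)[OF assms] by (simp add: BL_neg BR_neg)

lemma neg_Rx: assumes "\<alpha> \<in> Rx" shows "(\<lambda>x. - \<alpha> x) \<in> Rx"
  using assms neg_root neg_has root_has_t Rx_iff by metis

lemma rf_neg1: assumes "has_t u" "has_t w" shows "rf (\<lambda>x. - u x) w = - rf u w"
  using assms by (simp add: rf_app has_t_neg)
lemma rf_neg2: assumes "has_t u" "has_t w" shows "rf w (\<lambda>x. - u x) = - rf w u"
  using assms rf_neg1 rf_sym by metis

lemma sl2_triple: assumes "\<alpha> \<in> Rx"
  shows "\<exists>e f. e \<in> RS \<alpha> \<and> e \<noteq> 0 \<and> f \<in> RS (\<lambda>x. - \<alpha> x) \<and> br e f = sc (2 / rf \<alpha> \<alpha>) (tv \<alpha>)"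
proof -
  have a: "\<alpha> \<in> R" "rf \<alpha> \<alpha> \<noteq> 0" using assms Rx_iff by auto
  obtain e where e: "e \<in> RS \<alpha>" "e \<noteq> 0" using a root_iff by auto
  obtain f where f: "f \<in> RS (\<lambda>x. - \<alpha> x)" "B e f \<noteq> 0" using root_pair a e by blast
  define f' where "f' = sc (2 / (rf \<alpha> \<alpha> * B e f)) f"
  have "f' \<in> RS (\<lambda>x. - \<alpha> x)" unfolding f'_def using RS_sc f by blast
  moreover have "br e f' = sc (2 / rf \<alpha> \<alpha>) (tv \<alpha>)"
    unfolding f'_def using bracket_tv[OF a(1) root_has_t[OF a(1)] e(1) f(1)] a(2) f(2)
    by (simp add: brR_sc)
  ultimately show ?thesis using e by blast
qed

lemma RS_pow: assumes "f \<in> RS \<beta>" "v \<in> RS \<mu>"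
  shows "(br f ^^ j) v \<in> RS (\<lambda>x. \<mu> x + of_nat j * \<beta> x)"
proof (induct j)
  case 0 then show ?case using assms by simp
next
  case (Suc j)
  have "br f ((br f ^^ j) v) \<in> RS (\<lambda>z. \<beta> z + (\<mu> z + of_nat j * \<beta> z))"
    by (rule RS_br[OF assms(1) Suc])
  moreover have "(\<lambda>z. \<beta> z + (\<mu> z + of_nat j * \<beta> z)) = (\<lambda>x. \<mu> x + of_nat (Suc j) * \<beta> x)"
    by (auto simp: algebra_simps)
  ultimately show ?case by simp
qed

lemma sl2_core:
  assumes e: "e \<in> RS \<alpha>" and f: "f \<in> RS (\<lambda>x. - \<alpha> x)" and hh: "br e f = hh" "hh \<in> H" "\<alpha> hh = 2"
    and v0: "v0 \<in> RS \<mu>" "v0 \<noteq> 0" "br e v0 = 0" and nil: "(br f ^^ n) v0 = 0"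
  shows "\<exists>m::nat. \<mu> hh = of_nat m \<and> (\<forall>j\<le>m. (br f ^^ j) v0 \<noteq> 0)"
proof -
  let ?F = "\<lambda>j. (br f ^^ j) v0"
  have Fj: "?F j \<in> RS (\<lambda>x. \<mu> x + of_nat j * (- \<alpha> x))" for j
    using RS_pow[OF f v0(1)] by simp
  have wt: "br hh (?F j) = sc (\<mu> hh - 2 * of_nat j) (?F j)" for j
  proof -
    have "br hh (?F j) = sc (\<mu> hh + of_nat j * (- \<alpha> hh)) (?F j)" using Fj[of j] hh(2) unfolding RS_iff by blast
    moreover have "\<mu> hh + of_nat j * (- \<alpha> hh) = \<mu> hh - 2 * of_nat j" using hh(3) by simp
    ultimately show ?thesis by simp
  qed
  have key: "br e (?F (Suc j)) = sc (of_nat (Suc j) * (\<mu> hh - of_nat j)) (?F j)" for j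
  proof (induct j)
    case 0
    have "br e (br f v0) = br (br e f) v0 + br f (br e v0)" by (rule jac2)
    also have "br (br e f) v0 = sc (\<mu> hh) v0" using hh(1,2) v0(1) unfolding RS_iff by blast
    also have "br f (br e v0) = 0" using v0(3) by simp
    finally show ?case by simp
  next
    case (Suc j)
    have "br e (?F (Suc (Suc j))) = br e (br f (?F (Suc j)))" by simp
    also have "\<dots> = br (br e f) (?F (Suc j)) + br f (br e (?F (Suc j)))" by (rule jac2)
    also have "\<dots> = sc (\<mu> hh - 2 * of_nat (Suc j)) (?F (Suc j))
        + sc (of_nat (Suc j) * (\<mu> hh - of_nat j)) (?F (Suc j))"
      using wt[of "Suc j"] Suc hh(1) by (simp add: brR_sc)
    also have "\<dots> = sc (of_nat (Suc (Suc j)) * (\<mu> hh - of_nat (Suc j))) (?F (Suc j))"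
    proof -
      have "(\<mu> hh - 2 * of_nat (Suc j)) + of_nat (Suc j) * (\<mu> hh - of_nat j)
          = (of_nat (Suc (Suc j)) * (\<mu> hh - of_nat (Suc j)) :: complex)" by (simp add: algebra_simps)
      thus ?thesis using V.scale_left_distrib[symmetric] by metis
    qed
    finally show ?case .
  qed
  have ex: "\<exists>n. ?F n = 0" using nil by blast
  define n0 where "n0 = (LEAST n. ?F n = 0)"
  have n0: "?F n0 = 0" unfolding n0_def using LeastI_ex[OF ex] .
  have lt: "j < n0 \<Longrightarrow> ?F j \<noteq> 0" for j unfolding n0_def using not_less_Least by blast
  have "n0 \<noteq> 0" using n0 v0(2) by (cases n0) auto
  then obtain m where m: "n0 = Suc m" by (cases n0) auto
  have "sc (of_nat (Suc m) * (\<mu> hh - of_nat m)) (?F m) = 0" using key[of m] n0 m by simp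
  moreover have "?F m \<noteq> 0" using lt m by simp
  ultimately have "of_nat (Suc m) * (\<mu> hh - of_nat m) = (0::complex)" by simp
  hence "\<mu> hh = of_nat m" by (simp del: of_nat_Suc)
  moreover have "\<forall>j\<le>m. ?F j \<noteq> 0" using lt m by simp
  ultimately show ?thesis by blast
qed

end

context G begin

lemma string_pos: assumes a: "\<alpha> \<in> Rx" and b: "\<beta> \<in> R"
  shows "\<exists>N::int. 2 * rf \<beta> \<alpha> / rf \<alpha> \<alpha> = of_int N \<and>
           (\<forall>t::int. 0 \<le> t \<and> t \<le> N \<longrightarrow> (\<lambda>x. \<beta> x - of_int t * \<alpha> x) \<in> R)"
proof -
  have aR: "\<alpha> \<in> R" and anz: "rf \<alpha> \<alpha> \<noteq> 0" using a Rx_iff by auto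
  have ta: "has_t \<alpha>" using root_has_t aR by blast
  have tb: "has_t \<beta>" using root_has_t b by blast
  obtain e f where ef: "e \<in> RS \<alpha>" "e \<noteq> 0" "f \<in> RS (\<lambda>x. - \<alpha> x)" "br e f = sc (2 / rf \<alpha> \<alpha>) (tv \<alpha>)"
    using sl2_triple[OF a] by blast
  define hh where "hh = sc (2 / rf \<alpha> \<alpha>) (tv \<alpha>)"
  have hhH: "hh \<in> H" unfolding hh_def using Hsc tvec_H ta by blast
  have DEa: "DE \<alpha>" and DEb: "DE \<beta>" using aR b root_iff by auto
  have ahh: "\<alpha> hh = 2" unfolding hh_def using DE_smul[OF DEa tvec_H[OF ta]] rf_app[OF ta ta] anz by simp
  have bhh: "\<beta> hh = 2 * rf \<beta> \<alpha> / rf \<alpha> \<alpha>" unfolding hh_def using DE_smul[OF DEb tvec_H[OF ta]] rf_app[OF tb ta] by simp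
  obtain y where y: "y \<in> RS \<beta>" "y \<noteq> 0" using b root_iff by auto
  obtain n where n: "(br e ^^ n) y = 0" using GR3[OF a ef(1)] by blast
  have "n \<noteq> 0" using n y by (cases n) auto
  then obtain n' where n': "(br e ^^ Suc n') y = 0" using n by (cases n) auto
  define k where "k = (LEAST k. (br e ^^ Suc k) y = 0)"
  have k1: "(br e ^^ Suc k) y = 0" unfolding k_def by (rule LeastI[of _ n'], rule n')
  define v0 where "v0 = (br e ^^ k) y"
  have v0nz: "v0 \<noteq> 0"
  proof (cases k)
    case 0 then show ?thesis using y v0_def by simp
  next
    case (Suc k')
    have "k' < k" using Suc by simp
    hence "(br e ^^ Suc k') y \<noteq> 0" unfolding k_def using not_less_Least by blast
    thus ?thesis using Suc v0_def by simp
  qed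
  have v0RS: "v0 \<in> RS (\<lambda>x. \<beta> x + of_nat k * \<alpha> x)" unfolding v0_def by (rule RS_pow[OF ef(1) y(1)])
  have ev0: "br e v0 = 0" using k1 v0_def by simp
  have naR: "(\<lambda>x. - \<alpha> x) \<in> Rx" using neg_Rx a by blast
  obtain n2 where n2: "(br f ^^ n2) v0 = 0" using GR3[OF naR ef(3)] by blast
  obtain m where m: "\<beta> hh + of_nat k * \<alpha> hh = of_nat m" "\<forall>j\<le>m. (br f ^^ j) v0 \<noteq> 0"
    using sl2_core[OF ef(1) ef(3) ef(4)[folded hh_def] hhH ahh v0RS v0nz ev0 n2] by auto
  define N where "N = int m - 2 * int k"
  have "2 * rf \<beta> \<alpha> / rf \<alpha> \<alpha> = of_int N" using m(1) bhh ahh unfolding N_def by (simp add: algebra_simps)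
  moreover have "(\<lambda>x. \<beta> x - of_int t * \<alpha> x) \<in> R" if t: "0 \<le> t" "t \<le> N" for t
  proof -
    define j where "j = nat (int k + t)"
    have jm: "j \<le> m" using t unfolding j_def N_def by simp
    have "(br f ^^ j) v0 \<in> RS (\<lambda>x. (\<beta> x + of_nat k * \<alpha> x) + of_nat j * (- \<alpha> x))"
      by (rule RS_pow[OF ef(3) v0RS])
    moreover have "(\<lambda>x. (\<beta> x + of_nat k * \<alpha> x) + of_nat j * (- \<alpha> x)) = (\<lambda>x. \<beta> x - of_int t * \<alpha> x)"
    proof
      fix x
      have "(of_nat j :: complex) = of_int (int k + t)" unfolding j_def using t by simp
      thus "(\<beta> x + of_nat k * \<alpha> x) + of_nat j * (- \<alpha> x) = \<beta> x - of_int t * \<alpha> x"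
        by (simp add: algebra_simps)
    qed
    ultimately have "(br f ^^ j) v0 \<in> RS (\<lambda>x. \<beta> x - of_int t * \<alpha> x)" by simp
    moreover have "(br f ^^ j) v0 \<noteq> 0" using m(2) jm by blast
    moreover have "DE (\<lambda>x. \<beta> x - of_int t * \<alpha> x)" using DE_comb[OF DEb DEa, of 1 "- of_int t"] by simp
    ultimately show ?thesis using root_iff by blast
  qed
  ultimately show ?thesis by blast
qed

end

context G begin

lemma has_t_lin: assumes "has_t u" "has_t u'" shows "has_t (\<lambda>z. a * u z + b * u' z)"
  using has_t_comb(1)[OF assms(1) has_t_sc(1)[OF assms(2)], of a b] by simp

lemma has_t_ms: assumes "has_t u" "has_t u'" shows "has_t (\<lambda>z. u z - s * u' z)"
  using has_t_lin[OF assms, of 1 "- s"] by simp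

lemma has_t_pl: assumes "has_t u" "has_t u'" shows "has_t (\<lambda>z. u z + u' z)"
  using has_t_lin[OF assms, of 1 1] by simp

lemma rf_lin1: assumes "has_t u" "has_t u'" "has_t w"
  shows "rf (\<lambda>z. a * u z + b * u' z) w = a * rf u w + b * rf u' w"
  using rf_app[OF has_t_lin[OF assms(1,2)] assms(3)] rf_app[OF assms(1,3)] rf_app[OF assms(2,3)] by simp

lemma rf_ms1: assumes "has_t u" "has_t u'" "has_t w"
  shows "rf (\<lambda>z. u z - s * u' z) w = rf u w - s * rf u' w"
  using rf_app[OF has_t_ms[OF assms(1,2)] assms(3)] rf_app[OF assms(1,3)] rf_app[OF assms(2,3)] by simp

lemma rf_pl1: assumes "has_t u" "has_t u'" "has_t w"
  shows "rf (\<lambda>z. u z + u' z) w = rf u w + rf u' w"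
  using rf_app[OF has_t_pl[OF assms(1,2)] assms(3)] rf_app[OF assms(1,3)] rf_app[OF assms(2,3)] by simp

lemma rf_ms2: assumes "has_t u" "has_t u'" "has_t w"
  shows "rf w (\<lambda>z. u z - s * u' z) = rf w u - s * rf w u'"
  using rf_ms1[OF assms] rf_sym by metis

lemma rf_pl2: assumes "has_t u" "has_t u'" "has_t w"
  shows "rf w (\<lambda>z. u z + u' z) = rf w u + rf w u'"
  using rf_pl1[OF assms] rf_sym by metis

definition "cart u w = 2 * rf u w / rf w w"

lemma string: assumes a: "\<alpha> \<in> Rx" and b: "\<beta> \<in> R"
  shows "\<exists>N::int. cart \<beta> \<alpha> = of_int N \<and>
     (\<forall>t::int. (0 \<le> t \<and> t \<le> N \<or> N \<le> t \<and> t \<le> 0) \<longrightarrow> (\<lambda>x. \<beta> x - of_int t * \<alpha> x) \<in> R)"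
proof -
  obtain N where N: "2 * rf \<beta> \<alpha> / rf \<alpha> \<alpha> = of_int N"
     "\<forall>t::int. 0 \<le> t \<and> t \<le> N \<longrightarrow> (\<lambda>x. \<beta> x - of_int t * \<alpha> x) \<in> R"
    using string_pos[OF a b] by blast
  have na: "(\<lambda>x. - \<alpha> x) \<in> Rx" using neg_Rx a by blast
  obtain N' where N': "2 * rf \<beta> (\<lambda>x. - \<alpha> x) / rf (\<lambda>x. - \<alpha> x) (\<lambda>x. - \<alpha> x) = of_int N'"
     "\<forall>t::int. 0 \<le> t \<and> t \<le> N' \<longrightarrow> (\<lambda>x. \<beta> x - of_int t * (- \<alpha> x)) \<in> R"
    using string_pos[OF na b] by blast
  have ta: "has_t \<alpha>" "has_t \<beta>" using a b root_has_t Rx_iff by auto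
  have "rf \<beta> (\<lambda>x. - \<alpha> x) = - rf \<beta> \<alpha>" using rf_neg2 ta by blast
  moreover have "rf (\<lambda>x. - \<alpha> x) (\<lambda>x. - \<alpha> x) = rf \<alpha> \<alpha>" using neg_has ta by blast
  ultimately have "of_int N' = - (of_int N :: complex)" using N(1) N'(1) by (simp add: minus_divide_left)
  hence NN: "N' = - N" by (metis of_int_eq_iff of_int_minus)
  have "(\<lambda>x. \<beta> x - of_int t * \<alpha> x) \<in> R" if t: "0 \<le> t \<and> t \<le> N \<or> N \<le> t \<and> t \<le> 0" for t
  proof (cases "0 \<le> t \<and> t \<le> N")
    case True then show ?thesis using N(2) by blast
  next
    case False
    hence "0 \<le> - t \<and> - t \<le> N'" using t NN by auto
    hence "(\<lambda>x. \<beta> x - of_int (- t) * (- \<alpha> x)) \<in> R" using N'(2) by blast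
    thus ?thesis by simp
  qed
  thus ?thesis using N(1) unfolding cart_def by blast
qed

lemma cart_int: "\<alpha> \<in> Rx \<Longrightarrow> \<beta> \<in> R \<Longrightarrow> \<exists>N::int. cart \<beta> \<alpha> = of_int N"
  using string by blast

lemma refl_root: assumes "\<alpha> \<in> Rx" "\<beta> \<in> R" shows "(\<lambda>x. \<beta> x - cart \<beta> \<alpha> * \<alpha> x) \<in> R"
proof -
  obtain N where N: "cart \<beta> \<alpha> = of_int N"
     "\<forall>t::int. (0 \<le> t \<and> t \<le> N \<or> N \<le> t \<and> t \<le> 0) \<longrightarrow> (\<lambda>x. \<beta> x - of_int t * \<alpha> x) \<in> R"
    using string[OF assms] by blast
  have "0 \<le> N \<and> N \<le> N \<or> N \<le> N \<and> N \<le> 0" by auto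
  thus ?thesis using N by auto
qed

lemma step_root: assumes "\<alpha> \<in> Rx" "\<beta> \<in> R" "cart \<beta> \<alpha> = of_int N" "0 \<le> t" "t \<le> N"
  shows "(\<lambda>x. \<beta> x - of_int t * \<alpha> x) \<in> R"
  using string[OF assms(1,2)] assms(3-5) by (metis of_int_eq_iff)

lemma step_root_neg: assumes "\<alpha> \<in> Rx" "\<beta> \<in> R" "cart \<beta> \<alpha> = of_int N" "N \<le> t" "t \<le> 0"
  shows "(\<lambda>x. \<beta> x - of_int t * \<alpha> x) \<in> R"
  using string[OF assms(1,2)] assms(3-5) by (metis of_int_eq_iff)

lemma Rx_ht: "\<alpha> \<in> Rx \<Longrightarrow> has_t \<alpha>" using Rx_iff root_has_t by blast
lemma Rx_nz: "\<alpha> \<in> Rx \<Longrightarrow> rf \<alpha> \<alpha> \<noteq> 0" using Rx_iff by blast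
lemma Rx_R: "\<alpha> \<in> Rx \<Longrightarrow> \<alpha> \<in> R" using Rx_iff by blast

end

lemma arith1: fixes N M K :: int assumes "N \<ge> 3" "M < 0" "K*(N+M-N*M) = M*(N-2)" shows False
proof -
  have "M * (1 - N) \<ge> 0" using assms by (intro mult_nonpos_nonpos) auto
  hence D: "N + M - N*M > 0" using assms(1) by (simp add: algebra_simps)
  have "M * (N - 2) < 0" using assms by (intro mult_neg_pos) auto
  hence "K * (N+M-N*M) < 0" using assms(3) by simp
  hence "K < 0" using D by (meson linorder_not_le mult_nonneg_nonneg order_less_imp_le not_less)
  hence "K * (N+M-N*M) \<le> (-1) * (N+M-N*M)" using D by (intro mult_right_mono) auto
  hence "M*(N-2) \<le> - (N+M-N*M)" using assms(3) by simp
  hence "M*N - 2*M \<le> - N - M + N*M" by (simp add: algebra_simps)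
  thus False using assms(1,2) by (simp add: mult.commute)
qed
lemma arith2: fixes N M K :: int assumes "N \<ge> 3" "M \<ge> 2" "K*(N+M-N*M) = M*(N-2)" "(N - 2) * K \<ge> 0" shows False
proof -
  have "1 * 2 \<le> (M - 1) * (N - 1)" using assms by (intro mult_mono) auto
  hence D: "N + M - N*M < 0" by (simp add: algebra_simps)
  have "M * (N - 2) > 0" using assms by simp
  hence "K * (N+M-N*M) > 0" using assms(3) by simp
  hence "K < 0" using D by (simp add: zero_less_mult_iff)
  moreover have "N - 2 > 0" using assms by simp
  ultimately have "(N - 2) * K < 0" by (simp add: mult_pos_neg)
  thus False using assms(4) by simp
qed
lemma arith3: fixes N K :: int assumes "N \<ge> 3" "K*(1-N) = N-2" "(N - 2) * K \<ge> 0" shows False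
proof -
  have "K * (1 - N) > 0" using assms by simp
  hence "K < 0" using assms(1) by (simp add: zero_less_mult_iff)
  moreover have "N - 2 > 0" using assms by simp
  ultimately have "(N - 2) * K < 0" by (simp add: mult_pos_neg)
  thus False using assms(3) by simp
qed
lemma arith4: fixes N M :: int assumes "N * M < 0" shows "\<bar>M * (N*M - 3)\<bar> \<ge> 4"
proof -
  have "M \<noteq> 0" using assms by auto
  hence "\<bar>M\<bar> \<ge> 1" by simp
  moreover have "\<bar>N*M - 3\<bar> \<ge> 4" using assms by simp
  ultimately have "\<bar>M\<bar> * \<bar>N*M - 3\<bar> \<ge> 1 * 4" by (intro mult_mono) auto
  thus ?thesis by (simp add: abs_mult)
qed
lemma arith5: fixes N M :: int assumes "N * M \<ge> 0" "N * M \<le> 4" "M \<noteq> 0" shows "\<bar>N\<bar> \<le> 4"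
proof -
  have "\<bar>M\<bar> \<ge> 1" using assms by simp
  hence "\<bar>N\<bar> * 1 \<le> \<bar>N\<bar> * \<bar>M\<bar>" by (intro mult_left_mono) auto
  also have "\<dots> = N * M" using assms(1) by (simp add: abs_mult[symmetric])
  finally show ?thesis using assms by simp
qed

context G begin

lemma cart_negL: assumes "has_t u" "has_t w" shows "cart (\<lambda>x. - u x) w = - cart u w"
  unfolding cart_def using rf_neg1[OF assms] by simp
lemma cart_negR: assumes "has_t u" "has_t w" shows "cart u (\<lambda>x. - w x) = - cart u w"
  unfolding cart_def using rf_neg2[OF assms(2,1)] neg_has[OF assms(2)] by simp

lemma cart_eq: assumes "rf w w \<noteq> 0" "cart u w = c" shows "2 * rf u w = c * rf w w"
  using assms unfolding cart_def by (simp add: field_simps)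

lemma gam1:
  assumes x: "x \<in> Rx" and y: "y \<in> Rx" and N: "cart y x = of_int N" and M: "cart x y = of_int M"
    and N1: "N \<ge> 1" and D: "N + M - N*M \<noteq> 0"
  shows "(\<lambda>z. y z - of_int 1 * x z) \<in> Rx \<and> cart (\<lambda>z. y z - of_int 1 * x z) x = of_int (N - 2) \<and>
         (\<exists>K. cart x (\<lambda>z. y z - of_int 1 * x z) = of_int K \<and> K*(N+M-N*M) = M*(N-2))"
proof -
  define g where "g = (\<lambda>z. y z - of_int 1 * x z)"
  have tx: "has_t x" and ty: "has_t y" using x y Rx_ht by auto
  have ax: "rf x x \<noteq> 0" and ay: "rf y y \<noteq> 0" using x y Rx_nz by auto
  have gR: "g \<in> R" unfolding g_def by (rule step_root[OF x Rx_R[OF y] N]) (use N1 in auto)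
  have tg: "has_t g" using gR root_has_t by blast
  have sym: "rf y x = rf x y" by (rule rf_sym)
  have e1: "of_int N * rf x x = 2 * rf x y" using cart_eq[OF ax N] sym by simp
  have e2: "of_int M * rf y y = 2 * rf x y" using cart_eq[OF ay M] by simp
  have mnz: "rf x y \<noteq> 0" using e1 ax N1 by auto
  have gg: "rf g g = rf y y - 2 * rf x y + rf x x"
  proof -
    have "rf g g = rf y g - of_int 1 * rf x g" unfolding g_def by (rule rf_ms1[OF ty tx]) (rule tg[unfolded g_def])
    also have "rf y g = rf y y - of_int 1 * rf y x" unfolding g_def by (rule rf_ms2[OF ty tx ty])
    also have "rf x g = rf x y - of_int 1 * rf x x" unfolding g_def by (rule rf_ms2[OF ty tx tx])
    finally show ?thesis using sym by simp
  qed
  have gx: "rf g x = rf x y - rf x x"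
    unfolding g_def using rf_ms1[OF ty tx tx, of "of_int 1"] sym by simp
  have gnz: "rf g g \<noteq> 0"
  proof
    assume "rf g g = 0"
    hence "rf y y - 2 * rf x y + rf x x = 0" using gg by simp
    hence "(2 * rf x y) * (of_int N + of_int M - of_int N * of_int M) = 0"
      using e1 e2 by algebra
    hence "(of_int (N + M - N*M) :: complex) = 0" using mnz by simp
    thus False using D by (simp only: of_int_eq_0_iff)
  qed
  have gRx: "g \<in> Rx" using gR gnz Rx_iff by blast
  have c1: "cart g x = of_int (N - 2)"
  proof -
    have o: "(of_int (N-2)::complex) = of_int N - 2" by simp
    have "2 * rf g x = of_int (N - 2) * rf x x" using gx e1 o by algebra
    thus ?thesis unfolding cart_def using ax by simp
  qed
  obtain K where K: "cart x g = of_int K" using cart_int[OF gRx Rx_R[OF x]] by blast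
  have e3: "of_int K * (rf y y - 2 * rf x y + rf x x) = 2 * (rf x y - rf x x)"
    using cart_eq[OF gnz K] gg gx rf_sym[of x g] by simp
  have "(2 * rf x y) * (of_int K * (of_int N + of_int M - of_int N * of_int M)) = (2 * rf x y) * (of_int M * (of_int N - 2))"
    using e1 e2 e3 by algebra
  hence "(of_int (K*(N+M-N*M)) :: complex) = of_int (M*(N-2))" using mnz by simp
  hence "K*(N+M-N*M) = M*(N-2)" by (simp only: of_int_eq_iff)
  thus ?thesis using gRx c1 K unfolding g_def by blast
qed

end

lemma arithD1: fixes N M :: int assumes "N \<ge> 3" "M < 0" shows "N + M - N*M \<noteq> 0"
proof -
  have "M * (1 - N) \<ge> 0" using assms by (intro mult_nonpos_nonpos) auto
  thus ?thesis using assms(1) by (simp add: algebra_simps)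
qed
lemma arithD2: fixes N M :: int assumes "N \<ge> 3" "M \<ge> 2" shows "N + M - N*M \<noteq> 0"
proof -
  have "1 * 2 \<le> (M - 1) * (N - 1)" using assms by (intro mult_mono) auto
  thus ?thesis by (simp add: algebra_simps)
qed

context G begin

lemma rf_ms_both: assumes "has_t u" "has_t u'" "has_t v" "has_t v'"
  shows "rf (\<lambda>z. u z - s * u' z) (\<lambda>z. v z - t * v' z) = rf u v - t * rf u v' - s * rf u' v + s * t * rf u' v'"
proof -
  have "rf (\<lambda>z. u z - s * u' z) (\<lambda>z. v z - t * v' z) = rf u (\<lambda>z. v z - t * v' z) - s * rf u' (\<lambda>z. v z - t * v' z)"
    by (rule rf_ms1[OF assms(1,2) has_t_ms[OF assms(3,4)]])
  also have "rf u (\<lambda>z. v z - t * v' z) = rf u v - t * rf u v'" by (rule rf_ms2[OF assms(3,4,1)])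
  also have "rf u' (\<lambda>z. v z - t * v' z) = rf u' v - t * rf u' v'" by (rule rf_ms2[OF assms(3,4,2)])
  finally show ?thesis by (simp add: algebra_simps)
qed

lemma neg_in_Rx: "x \<in> Rx \<Longrightarrow> (\<lambda>z. - x z) \<in> Rx" by (rule neg_Rx)

lemma step1_pos: assumes x: "x \<in> Rx" and y: "y \<in> Rx" and N: "cart y x = of_int N" and M: "cart x y = of_int M"
  and N3: "N \<ge> 3" and M0: "M < 0" shows False
proof -
  have D: "N + M - N*M \<noteq> 0" using arithD1[OF N3 M0] .
  obtain K where "K*(N+M-N*M) = M*(N-2)" using gam1[OF x y N M _ D] N3 by auto
  thus False using arith1[OF N3 M0] by blast
qed

lemma step1: assumes x: "x \<in> Rx" and y: "y \<in> Rx" and N: "cart y x = of_int N" and M: "cart x y = of_int M"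
  and NM: "N * M < 0" shows "\<bar>N\<bar> \<le> 2"
proof (rule ccontr)
  assume "\<not> \<bar>N\<bar> \<le> 2"
  hence "N \<ge> 3 \<or> N \<le> -3" by auto
  thus False
  proof
    assume N3: "N \<ge> 3"
    hence "M < 0" using NM by (meson linorder_not_le mult_nonneg_nonneg order_trans zero_le_numeral)
    thus False using step1_pos[OF x y N M N3] by blast
  next
    assume N3: "N \<le> -3"
    hence "M > 0" using NM by (smt (verit) mult_nonpos_nonpos)
    have tx: "has_t x" "has_t y" using x y Rx_ht by auto
    have c1: "cart y (\<lambda>z. - x z) = of_int (- N)" using cart_negR[OF tx(2,1)] N by simp
    have c2: "cart (\<lambda>z. - x z) y = of_int (- M)" using cart_negL[OF tx(1,2)] M by simp
    show False using step1_pos[OF neg_in_Rx[OF x] y c1 c2] N3 \<open>M > 0\<close> by linarith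
  qed
qed

lemma cart_of: assumes "rf w w \<noteq> 0" "2 * rf u w = c * rf w w" shows "cart u w = c"
  using assms unfolding cart_def by (simp add: field_simps)

lemma SL: assumes x: "x \<in> Rx" and y: "y \<in> Rx" and N: "cart y x = of_int N" and M: "cart x y = of_int M"
  shows "N * M \<ge> 0"
proof (rule ccontr)
  assume "\<not> N * M \<ge> 0"
  hence NM: "N * M < 0" by simp
  have tx: "has_t x" and ty: "has_t y" using x y Rx_ht by auto
  have ax: "rf x x \<noteq> 0" and ay: "rf y y \<noteq> 0" using x y Rx_nz by auto
  have sym: "rf y x = rf x y" by (rule rf_sym)
  have e1: "of_int N * rf x x = 2 * rf x y" using cart_eq[OF ax N] sym by simp
  have e2: "of_int M * rf y y = 2 * rf x y" using cart_eq[OF ay M] by simp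
  define xp where "xp = (\<lambda>z. y z - of_int N * x z)"
  define yp where "yp = (\<lambda>z. x z - of_int M * y z)"
  have xpR: "xp \<in> R" unfolding xp_def using refl_root[OF x Rx_R[OF y]] N by simp
  have ypR: "yp \<in> R" unfolding yp_def using refl_root[OF y Rx_R[OF x]] M by simp
  have n1: "rf xp xp = rf y y"
  proof -
    have "rf xp xp = rf y y - of_int N * rf y x - of_int N * rf x y + of_int N * of_int N * rf x x"
      unfolding xp_def by (rule rf_ms_both[OF ty tx ty tx])
    thus ?thesis using e1 sym by algebra
  qed
  have n2: "rf yp yp = rf x x"
  proof -
    have "rf yp yp = rf x x - of_int M * rf x y - of_int M * rf y x + of_int M * of_int M * rf y y"
      unfolding yp_def by (rule rf_ms_both[OF tx ty tx ty])
    thus ?thesis using e2 sym by algebra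
  qed
  have n3: "rf yp xp = rf x y - of_int N * rf x x - of_int M * rf y y + of_int M * of_int N * rf y x"
    unfolding yp_def xp_def by (rule rf_ms_both[OF tx ty ty tx])
  have xpRx: "xp \<in> Rx" using xpR n1 ay Rx_iff by auto
  have ypRx: "yp \<in> Rx" using ypR n2 ax Rx_iff by auto
  have o1: "(of_int (M*(N*M-3)) :: complex) = of_int M * (of_int N * of_int M - 3)" by simp
  have o2: "(of_int (N*(N*M-3)) :: complex) = of_int N * (of_int N * of_int M - 3)" by simp
  have c1: "cart yp xp = of_int (M*(N*M-3))"
  proof (rule cart_of)
    show "rf xp xp \<noteq> 0" using n1 ay by simp
    have "2 * (rf x y - of_int N * rf x x - of_int M * rf y y + of_int M * of_int N * rf y x)
       = of_int M * (of_int N * of_int M - 3) * rf y y" using e1 e2 sym by algebra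
    thus "2 * rf yp xp = of_int (M*(N*M-3)) * rf xp xp" by (simp only: n1 n3 o1)
  qed
  have c2: "cart xp yp = of_int (N*(N*M-3))"
  proof (rule cart_of)
    show "rf yp yp \<noteq> 0" using n2 ax by simp
    have "2 * (rf x y - of_int N * rf x x - of_int M * rf y y + of_int M * of_int N * rf y x)
       = of_int N * (of_int N * of_int M - 3) * rf x x" using e1 e2 sym by algebra
    thus "2 * rf xp yp = of_int (N*(N*M-3)) * rf yp yp" by (simp only: n2 n3 o2 rf_sym[of xp yp])
  qed
  have "(N*M-3) * (N*M-3) > 0" using NM by (simp add: zero_less_mult_iff)
  hence "(N * M) * ((N*M-3) * (N*M-3)) < 0" using NM by (simp add: mult_neg_pos)
  hence "(M*(N*M-3)) * (N*(N*M-3)) < 0" by (simp add: algebra_simps)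
  hence "\<bar>M*(N*M-3)\<bar> \<le> 2" using step1[OF xpRx ypRx c1 c2] by blast
  thus False using arith4[OF NM] by simp
qed

end

context G begin

lemma pb1: assumes x: "x \<in> Rx" and y: "y \<in> Rx" and N: "cart y x = of_int N" and M: "cart x y = of_int M"
  and N3: "N \<ge> 3" and M2: "M \<ge> 2" shows False
proof -
  have D: "N + M - N*M \<noteq> 0" using arithD2[OF N3 M2] .
  obtain K where g: "(\<lambda>z. y z - of_int 1 * x z) \<in> Rx" "cart (\<lambda>z. y z - of_int 1 * x z) x = of_int (N - 2)"
    "cart x (\<lambda>z. y z - of_int 1 * x z) = of_int K" "K*(N+M-N*M) = M*(N-2)"
    using gam1[OF x y N M _ D] N3 by auto
  have "(N - 2) * K \<ge> 0" by (rule SL[OF x g(1) g(2) g(3)])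
  thus False using arith2[OF N3 M2 g(4)] by blast
qed

lemma pb2: assumes x: "x \<in> Rx" and y: "y \<in> Rx" and N: "cart y x = of_int 1" and M: "cart x y = of_int M"
  and M5: "M \<ge> 5" shows False
proof -
  have tx: "has_t x" and ty: "has_t y" using x y Rx_ht by auto
  have ax: "rf x x \<noteq> 0" and ay: "rf y y \<noteq> 0" using x y Rx_nz by auto
  have sym: "rf y x = rf x y" by (rule rf_sym)
  have e1: "rf x x = 2 * rf x y" using cart_eq[OF ax N] sym by simp
  have e2: "of_int M * rf y y = 2 * rf x y" using cart_eq[OF ay M] by simp
  have mnz: "rf x y \<noteq> 0" using e1 ax by auto
  have two: "(of_int 2::complex) = 2" by simp
  define g where "g = (\<lambda>z. x z - of_int 2 * y z)"
  have gR: "g \<in> R" unfolding g_def by (rule step_root[OF y Rx_R[OF x] M]) (use M5 in auto)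
  have tg: "has_t g" using gR root_has_t by blast
  have gg: "rf g g = rf x x - of_int 2 * rf x y - of_int 2 * rf y x + of_int 2 * of_int 2 * rf y y"
    unfolding g_def by (rule rf_ms_both[OF tx ty tx ty])
  have gy: "rf g y = rf x y - of_int 2 * rf y y" unfolding g_def by (rule rf_ms1[OF tx ty ty])
  have gnz: "rf g g \<noteq> 0"
  proof
    assume "rf g g = 0"
    hence "(2 * rf x y) * (4 - of_int M) = 0" using gg e1 e2 sym two by algebra
    hence "(of_int M :: complex) = 4" using mnz by simp
    hence "M = 4" by (metis of_int_eq_numeral_iff)
    thus False using M5 by simp
  qed
  have gRx: "g \<in> Rx" using gR gnz Rx_iff by blast
  have c1: "cart g y = of_int (M - 4)"
  proof (rule cart_of[OF ay])
    have "(of_int (M - 4) :: complex) = of_int M - 4" by simp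
    thus "2 * rf g y = of_int (M - 4) * rf y y" using gy e2 two by algebra
  qed
  have c2: "cart y g = of_int (-1)"
  proof (rule cart_of[OF gnz])
    have m1: "(of_int (-1)::complex) = -1" by simp
    show "2 * rf y g = of_int (-1) * rf g g" using gy gg e1 sym rf_sym[of y g] two m1 by algebra
  qed
  have "(M - 4) * (-1) \<ge> 0" by (rule SL[OF y gRx c1 c2])
  thus False using M5 by simp
qed

lemma pb_pos: assumes x: "x \<in> Rx" and y: "y \<in> Rx" and N: "cart y x = of_int N" and M: "cart x y = of_int M"
  and "N > 0" "M > 0" "N * M \<ge> 5" shows False
proof -
  consider "N = 1" | "M = 1" | "N \<ge> 3" "M \<ge> 2" | "N = 2" "M \<ge> 3"
  proof -
    have "N = 1 \<or> M = 1 \<or> (N \<ge> 3 \<and> M \<ge> 2) \<or> (N = 2 \<and> M \<ge> 3)"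
    proof (rule ccontr)
      assume "\<not> ?thesis"
      hence "N = 2 \<and> M = 2" using assms(5,6) by auto
      thus False using assms(7) by simp
    qed
    thus ?thesis using that by blast
  qed
  thus False
  proof cases
    case 1
    hence "M \<ge> 5" using assms(7) by simp
    thus False using pb2[OF x y _ M] N 1 by simp
  next
    case 2
    hence "N \<ge> 5" using assms(7) by simp
    thus False using pb2[OF y x _ N] M 2 by simp
  next
    case 3 thus False using pb1[OF x y N M] by blast
  next
    case 4 thus False using pb1[OF y x M N] by simp
  qed
qed

lemma pb: assumes x: "x \<in> Rx" and y: "y \<in> Rx" and N: "cart y x = of_int N" and M: "cart x y = of_int M"
  shows "N * M \<le> 4"
proof (rule ccontr)
  assume "\<not> N * M \<le> 4"
  hence NM: "N * M \<ge> 5" by simp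
  have "N \<noteq> 0" "M \<noteq> 0" using NM by auto
  hence "(N > 0 \<and> M > 0) \<or> (N < 0 \<and> M < 0)" using NM
    by (metis linorder_neqE_linordered_idom mult_neg_pos mult_pos_neg not_less order.trans zero_le_numeral)
  thus False
  proof
    assume "N > 0 \<and> M > 0" thus False using pb_pos[OF x y N M] NM by blast
  next
    assume NM0: "N < 0 \<and> M < 0"
    have tx: "has_t x" "has_t y" using x y Rx_ht by auto
    have c1: "cart y (\<lambda>z. - x z) = of_int (- N)" using cart_negR[OF tx(2,1)] N by simp
    have c2: "cart (\<lambda>z. - x z) y = of_int (- M)" using cart_negL[OF tx(1,2)] M by simp
    show False using pb_pos[OF neg_in_Rx[OF x] y c1 c2] NM0 NM by simp
  qed
qed

lemma iso_pos: assumes u: "u \<in> R" "rf u u = 0" and g: "\<gamma> \<in> Rx" and N: "cart u \<gamma> = of_int N" and N3: "N \<ge> 3"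
  shows False
proof -
  have tu: "has_t u" using u root_has_t by blast
  have tg: "has_t \<gamma>" using g Rx_ht by blast
  have ag: "rf \<gamma> \<gamma> \<noteq> 0" using g Rx_nz by blast
  have e1: "2 * rf u \<gamma> = of_int N * rf \<gamma> \<gamma>" using cart_eq[OF ag N] by simp
  define w where "w = (\<lambda>z. u z - of_int 1 * \<gamma> z)"
  have wR: "w \<in> R" unfolding w_def by (rule step_root[OF g u(1) N]) (use N3 in auto)
  have ww: "rf w w = rf u u - of_int 1 * rf u \<gamma> - of_int 1 * rf \<gamma> u + of_int 1 * of_int 1 * rf \<gamma> \<gamma>"
    unfolding w_def by (rule rf_ms_both[OF tu tg tu tg])
  have wg: "rf w \<gamma> = rf u \<gamma> - of_int 1 * rf \<gamma> \<gamma>" unfolding w_def by (rule rf_ms1[OF tu tg tg])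
  have o: "(of_int (1 - N) :: complex) = 1 - of_int N" by simp
  have ww2: "rf w w = of_int (1 - N) * rf \<gamma> \<gamma>" using ww u(2) e1 o rf_sym[of \<gamma> u] of_int_1[where 'a=complex] by algebra
  have "(of_int (1 - N) :: complex) \<noteq> 0" using N3 by simp
  hence wnz: "rf w w \<noteq> 0" using ww2 ag by simp
  have wRx: "w \<in> Rx" using wR wnz Rx_iff by blast
  have c1eq: "2 * rf w \<gamma> = of_int (N - 2) * rf \<gamma> \<gamma>"
  proof -
    have "rf w \<gamma> = rf u \<gamma> - rf \<gamma> \<gamma>" using wg by simp
    hence "2 * rf w \<gamma> = 2 * rf u \<gamma> - 2 * rf \<gamma> \<gamma>" by (simp add: right_diff_distrib)
    also have "\<dots> = (of_int N - 2) * rf \<gamma> \<gamma>" using e1 by (simp add: algebra_simps)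
    finally show "2 * rf w \<gamma> = of_int (N - 2) * rf \<gamma> \<gamma>" by simp
  qed
  have c1: "cart w \<gamma> = of_int (N - 2)" by (rule cart_of[OF ag c1eq])
  obtain K where K: "cart \<gamma> w = of_int K" using cart_int[OF wRx Rx_R[OF g]] by blast
  have "of_int K * rf w w = 2 * rf \<gamma> w" using cart_eq[OF wnz K] by simp
  also have "\<dots> = 2 * rf w \<gamma>" using rf_sym[of \<gamma> w] by simp
  finally have "of_int K * (of_int (1 - N) * rf \<gamma> \<gamma>) = of_int (N - 2) * rf \<gamma> \<gamma>" using c1eq ww2 by simp
  hence "rf \<gamma> \<gamma> * (of_int K * of_int (1 - N)) = rf \<gamma> \<gamma> * of_int (N - 2)" by (simp add: algebra_simps)
  hence "(of_int (K * (1 - N)) :: complex) = of_int (N - 2)" using ag by simp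
  hence KN: "K * (1 - N) = N - 2" by (simp only: of_int_eq_iff)
  have "(N - 2) * K \<ge> 0" by (rule SL[OF g wRx c1 K])
  thus False using arith3[OF N3 KN] by blast
qed

lemma Cbnd: assumes u: "u \<in> R" and g: "\<gamma> \<in> Rx" shows "\<exists>N::int. cart u \<gamma> = of_int N \<and> \<bar>N\<bar> \<le> 4"
proof -
  obtain N where N: "cart u \<gamma> = of_int N" using cart_int[OF g u] by blast
  have "\<bar>N\<bar> \<le> 4"
  proof (cases "rf u u = 0")
    case True
    have tu: "has_t u" "has_t \<gamma>" using u g root_has_t Rx_ht by auto
    show ?thesis
    proof (rule ccontr)
      assume "\<not> \<bar>N\<bar> \<le> 4"
      hence "N \<ge> 3 \<or> - N \<ge> 3" by auto
      thus False
      proof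
        assume "N \<ge> 3" thus False using iso_pos[OF u True g N] by blast
      next
        assume N3: "- N \<ge> 3"
        have "cart u (\<lambda>z. - \<gamma> z) = of_int (- N)" using cart_negR[OF tu] N by simp
        thus False using iso_pos[OF u True neg_in_Rx[OF g] _ N3] by blast
      qed
    qed
  next
    case False
    hence uRx: "u \<in> Rx" using u Rx_iff by blast
    obtain M where M: "cart \<gamma> u = of_int M" using cart_int[OF uRx Rx_R[OF g]] by blast
    show ?thesis
    proof (cases "N = 0")
      case True then show ?thesis by simp
    next
      case False
      have ag: "rf \<gamma> \<gamma> \<noteq> 0" using g Rx_nz by blast
      have "rf u \<gamma> \<noteq> 0" using N False ag unfolding cart_def by auto
      hence "rf \<gamma> u \<noteq> 0" using rf_sym by metis
      hence "M \<noteq> 0" using M \<open>rf u u \<noteq> 0\<close> unfolding cart_def by auto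
      moreover have "N * M \<ge> 0" by (rule SL[OF g uRx N M])
      moreover have "N * M \<le> 4" by (rule pb[OF g uRx N M])
      ultimately show ?thesis using arith5 by blast
    qed
  qed
  thus ?thesis using N by blast
qed

end

context G begin

lemma transl:
  assumes g: "\<gamma> \<in> Rx" and g': "\<gamma>' \<in> Rx" and a1: "rf \<gamma>' \<gamma>' = rf \<gamma> \<gamma>" and a2: "rf \<gamma> \<gamma>' = - rf \<gamma> \<gamma>"
    and u: "u \<in> R"
  shows "rf u \<gamma> + rf u \<gamma>' = 0"
proof -
  define a where "a = rf \<gamma> \<gamma>"
  have anz: "a \<noteq> 0" unfolding a_def using Rx_nz[OF g] .
  have tg: "has_t \<gamma>" "has_t \<gamma>'" using g g' Rx_ht by auto
  define p where "p = rf u \<gamma>"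
  define q where "q = rf u \<gamma>'"
  define s where "s = p + q"
  have a2': "rf \<gamma>' \<gamma> = - a" using a2 rf_sym a_def by metis
  have a1': "rf \<gamma>' \<gamma>' = a" using a1 a_def by simp
  have iter: "\<exists>w\<in>R. rf w \<gamma> = p - 2 * of_nat k * s \<and> rf w \<gamma>' = q + 2 * of_nat k * s" for k
  proof (induct k)
    case 0 then show ?case using u p_def q_def by auto
  next
    case (Suc k)
    then obtain w where w: "w \<in> R" "rf w \<gamma> = p - 2 * of_nat k * s" "rf w \<gamma>' = q + 2 * of_nat k * s" by blast
    have tw: "has_t w" using w root_has_t by blast
    define w1 where "w1 = (\<lambda>z. w z - cart w \<gamma>' * \<gamma>' z)"
    have w1R: "w1 \<in> R" unfolding w1_def by (rule refl_root[OF g' w(1)])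
    have tw1: "has_t w1" using w1R root_has_t by blast
    have cw: "cart w \<gamma>' = 2 * rf w \<gamma>' / a" unfolding cart_def using a1' by simp
    have r1: "rf w1 \<gamma> = rf w \<gamma> + 2 * rf w \<gamma>'"
    proof -
      have "rf w1 \<gamma> = rf w \<gamma> - cart w \<gamma>' * rf \<gamma>' \<gamma>" unfolding w1_def by (rule rf_ms1[OF tw tg(2) tg(1)])
      moreover have "cart w \<gamma>' * rf \<gamma>' \<gamma> = - 2 * rf w \<gamma>'" using cw a2' anz by simp
      ultimately show ?thesis by simp
    qed
    have r2: "rf w1 \<gamma>' = - rf w \<gamma>'"
    proof -
      have "rf w1 \<gamma>' = rf w \<gamma>' - cart w \<gamma>' * rf \<gamma>' \<gamma>'" unfolding w1_def by (rule rf_ms1[OF tw tg(2) tg(2)])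
      moreover have "cart w \<gamma>' * rf \<gamma>' \<gamma>' = 2 * rf w \<gamma>'" using cw a1' anz by simp
      ultimately show ?thesis by simp
    qed
    define w2 where "w2 = (\<lambda>z. w1 z - cart w1 \<gamma> * \<gamma> z)"
    have w2R: "w2 \<in> R" unfolding w2_def by (rule refl_root[OF g w1R])
    have cw1: "cart w1 \<gamma> = 2 * rf w1 \<gamma> / a" unfolding cart_def using a_def by simp
    have r3: "rf w2 \<gamma> = - rf w1 \<gamma>"
    proof -
      have "rf w2 \<gamma> = rf w1 \<gamma> - cart w1 \<gamma> * rf \<gamma> \<gamma>" unfolding w2_def by (rule rf_ms1[OF tw1 tg(1) tg(1)])
      moreover have "cart w1 \<gamma> * rf \<gamma> \<gamma> = 2 * rf w1 \<gamma>" using cw1 anz a_def by simp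
      ultimately show ?thesis by simp
    qed
    have r4: "rf w2 \<gamma>' = rf w1 \<gamma>' + 2 * rf w1 \<gamma>"
    proof -
      have "rf w2 \<gamma>' = rf w1 \<gamma>' - cart w1 \<gamma> * rf \<gamma> \<gamma>'" unfolding w2_def by (rule rf_ms1[OF tw1 tg(1) tg(2)])
      moreover have "cart w1 \<gamma> * rf \<gamma> \<gamma>' = - 2 * rf w1 \<gamma>" using cw1 anz a2 a_def by simp
      ultimately show ?thesis by simp
    qed
    have "rf w2 \<gamma> = p - 2 * of_nat (Suc k) * s" using r3 r1 w(2,3) s_def by (simp add: algebra_simps)
    moreover have "rf w2 \<gamma>' = q + 2 * of_nat (Suc k) * s" using r4 r2 r1 w(2,3) s_def by (simp add: algebra_simps)
    ultimately show ?case using w2R by blast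
  qed
  have bnd: "cmod (p - 2 * of_nat k * s) \<le> 2 * cmod a" for k
  proof -
    obtain w where w: "w \<in> R" "rf w \<gamma> = p - 2 * of_nat k * s" using iter by blast
    obtain N :: int where N: "cart w \<gamma> = of_int N" "\<bar>N\<bar> \<le> 4" using Cbnd[OF w(1) g] by blast
    have "2 * rf w \<gamma> = of_int N * a" using cart_eq[OF _ N(1)] anz a_def by simp
    hence "2 * cmod (rf w \<gamma>) = cmod (of_int N) * cmod a" by (metis norm_mult norm_numeral)
    moreover have "cmod (of_int N :: complex) \<le> 4" using N(2) by (simp add: norm_of_int)
    ultimately have "2 * cmod (rf w \<gamma>) \<le> 4 * cmod a" by (simp add: mult_right_mono)
    thus ?thesis using w(2) by simp
  qed
  have "s = 0"
  proof (rule ccontr)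
    assume snz: "s \<noteq> 0"
    define k where "k = nat \<lceil>(2 * cmod a + cmod p) / (2 * cmod s)\<rceil> + 1"
    have "real k > (2 * cmod a + cmod p) / (2 * cmod s)" unfolding k_def by linarith
    hence "real k * (2 * cmod s) > 2 * cmod a + cmod p" using snz by (simp add: field_simps)
    moreover have "cmod (2 * of_nat k * s) = real k * (2 * cmod s)" by (simp add: norm_mult)
    moreover have "cmod (p - 2 * of_nat k * s) \<ge> cmod (2 * of_nat k * s) - cmod p"
      using norm_triangle_ineq3[of "2 * of_nat k * s" p] by (simp add: norm_minus_commute)
    ultimately show False using bnd[of k] by linarith
  qed
  thus ?thesis using s_def p_def q_def by simp
qed

end

locale GC = G sc br B H for sc :: "complex \<Rightarrow> 'g::ab_group_add \<Rightarrow> 'g" and br B H +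
  fixes \<alpha>0 :: "'g \<Rightarrow> complex" and c :: complex
  assumes a0: "\<alpha>0 \<in> nonisotropic_roots sc br B H"
    and c_nz: "c \<noteq> 0"
    and c_real: "\<forall>u\<in>real_span (root_class sc br B H \<alpha>0).
                   \<forall>v\<in>real_span (root_class sc br B H \<alpha>0). c * rform B H u v \<in> \<real>"
    and c_pos: "\<exists>\<gamma>\<in>root_class sc br B H \<alpha>0. 0 < Re (c * rform B H \<gamma> \<gamma>)"
begin

abbreviation "C \<equiv> root_class sc br B H \<alpha>0"
definition "rel a b \<longleftrightarrow> a \<in> Rx \<and> b \<in> Rx \<and> rf a b \<noteq> 0"

lemma C_iff: "\<beta> \<in> C \<longleftrightarrow> \<beta> \<in> Rx \<and> rel\<^sup>*\<^sup>* \<alpha>0 \<beta>"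
proof -
  have "rel = (\<lambda>a b. a \<in> Rx \<and> b \<in> Rx \<and> rf a b \<noteq> 0)" by (auto simp: rel_def fun_eq_iff)
  thus ?thesis unfolding root_class_def by simp
qed

lemma C_Rx: "\<beta> \<in> C \<Longrightarrow> \<beta> \<in> Rx" using C_iff by blast
lemma C_R: "\<beta> \<in> C \<Longrightarrow> \<beta> \<in> R" using C_Rx Rx_R by blast
lemma C_ht: "\<beta> \<in> C \<Longrightarrow> has_t \<beta>" using C_Rx Rx_ht by blast
lemma a0C: "\<alpha>0 \<in> C" using C_iff a0 by auto

lemma C_link: assumes "\<beta> \<in> C" "\<gamma> \<in> Rx" "rf \<beta> \<gamma> \<noteq> 0" shows "\<gamma> \<in> C"
proof -
  have "rel \<beta> \<gamma>" using assms C_Rx rel_def by blast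
  moreover have "rel\<^sup>*\<^sup>* \<alpha>0 \<beta>" using assms C_iff by blast
  ultimately show ?thesis using C_iff assms(2) by (meson rtranclp.rtrancl_into_rtrancl)
qed

lemma C_neg: assumes "\<beta> \<in> C" shows "(\<lambda>z. - \<beta> z) \<in> C"
proof (rule C_link[OF assms])
  show "(\<lambda>z. - \<beta> z) \<in> Rx" using neg_Rx C_Rx assms by blast
  show "rf \<beta> (\<lambda>z. - \<beta> z) \<noteq> 0" using rf_neg2[OF C_ht[OF assms] C_ht[OF assms]] Rx_nz[OF C_Rx[OF assms]] by simp
qed

lemma ratio: assumes x: "x \<in> Rx" and y: "y \<in> Rx" and m: "rf x y \<noteq> 0"
  shows "\<exists>q>0. rf y y = of_real q * rf x x"
proof -
  obtain N where N: "cart y x = of_int N" using cart_int[OF x Rx_R[OF y]] by blast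
  obtain M where M: "cart x y = of_int M" using cart_int[OF y Rx_R[OF x]] by blast
  have ax: "rf x x \<noteq> 0" and ay: "rf y y \<noteq> 0" using x y Rx_nz by auto
  have e1: "of_int N * rf x x = 2 * rf x y" using cart_eq[OF ax N] rf_sym[of y x] by simp
  have e2: "of_int M * rf y y = 2 * rf x y" using cart_eq[OF ay M] by simp
  have "N \<noteq> 0" using e1 m by auto
  have "M \<noteq> 0" using e2 m by auto
  have "N * M \<ge> 0" by (rule SL[OF x y N M])
  moreover have "N * M \<noteq> 0" using \<open>N \<noteq> 0\<close> \<open>M \<noteq> 0\<close> by simp
  ultimately have "N * M > 0" by linarith
  hence "(0 < N \<and> 0 < M) \<or> (N < 0 \<and> M < 0)" by (simp add: zero_less_mult_iff)
  hence pos: "real_of_int N / real_of_int M > 0" by (auto simp: zero_less_divide_iff)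
  have "rf y y = (of_int N / of_int M) * rf x x" using e1 e2 \<open>M \<noteq> 0\<close> by (simp add: field_simps)
  moreover have "(of_int N / of_int M :: complex) = of_real (real_of_int N / real_of_int M)" by simp
  ultimately show ?thesis using pos by metis
qed

lemma C_ratio: assumes "\<beta> \<in> C" shows "\<exists>q>0. rf \<beta> \<beta> = of_real q * rf \<alpha>0 \<alpha>0"
proof -
  have "rel\<^sup>*\<^sup>* \<alpha>0 \<beta>" using assms C_iff by blast
  thus ?thesis
  proof (induct rule: rtranclp_induct)
    case base show ?case by (intro exI[of _ 1]) simp
  next
    case (step y z)
    obtain q where q: "q > 0" "rf y y = of_real q * rf \<alpha>0 \<alpha>0" using step by blast
    obtain q' where q': "q' > 0" "rf z z = of_real q' * rf y y" using ratio step(2) rel_def by blast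
    have "rf z z = of_real (q' * q) * rf \<alpha>0 \<alpha>0" using q q' by simp
    thus ?case using q q' by (intro exI[of _ "q' * q"]) simp
  qed
qed

lemma C_rs: assumes "\<beta> \<in> C" shows "\<beta> \<in> real_span C"
proof -
  show ?thesis unfolding real_span_def
    apply (rule CollectI) apply (rule exI[of _ "{\<beta>}"]) apply (rule exI[of _ "\<lambda>_. 1"])
    using assms by auto
qed

definition "g u w = Re (c * rf u w)"

lemma c_real_rs: assumes "u \<in> real_span C" "w \<in> real_span C" shows "c * rf u w = of_real (g u w)"
proof -
  have "c * rf u w \<in> \<real>" using c_real assms by blast
  then obtain r where r: "c * rf u w = of_real r" by (auto elim: Reals_cases)
  thus ?thesis unfolding g_def by simp
qed

lemma c_real_C: "\<beta> \<in> C \<Longrightarrow> \<beta>' \<in> C \<Longrightarrow> c * rf \<beta> \<beta>' = of_real (g \<beta> \<beta>')"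
  using c_real_rs C_rs by blast

lemma g_sym: "g u w = g w u" unfolding g_def using rf_sym by metis

lemma a0_pos: "c * rf \<alpha>0 \<alpha>0 = of_real (g \<alpha>0 \<alpha>0) \<and> g \<alpha>0 \<alpha>0 > 0"
proof -
  obtain \<gamma> where g: "\<gamma> \<in> C" "0 < Re (c * rf \<gamma> \<gamma>)" using c_pos by blast
  obtain q where q: "q > 0" "rf \<gamma> \<gamma> = of_real q * rf \<alpha>0 \<alpha>0" using C_ratio g(1) by blast
  have r: "c * rf \<alpha>0 \<alpha>0 = of_real (g \<alpha>0 \<alpha>0)" using c_real_C a0C by blast
  have "c * rf \<gamma> \<gamma> = of_real (q * g \<alpha>0 \<alpha>0)" using q(2) r by (simp add: algebra_simps)
  hence "0 < q * g \<alpha>0 \<alpha>0" using g(2) by simp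
  thus ?thesis using r q(1) by (simp add: zero_less_mult_iff)
qed

lemma C_pos: assumes "\<beta> \<in> C" shows "c * rf \<beta> \<beta> = of_real (g \<beta> \<beta>) \<and> g \<beta> \<beta> > 0"
proof -
  obtain q where q: "q > 0" "rf \<beta> \<beta> = of_real q * rf \<alpha>0 \<alpha>0" using C_ratio assms by blast
  have "c * rf \<beta> \<beta> = of_real (q * g \<alpha>0 \<alpha>0)" using q(2) a0_pos by (simp add: algebra_simps)
  moreover hence "g \<beta> \<beta> = q * g \<alpha>0 \<alpha>0" unfolding g_def by simp
  ultimately show ?thesis using q(1) a0_pos by simp
qed

end

lemma int_prod1: fixes a b :: int assumes "a \<ge> 1" "b \<ge> 1" "a * b = 1" shows "a = 1"
proof -
  have "a * 1 \<le> a * b" using assms by (intro mult_left_mono) auto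
  thus ?thesis using assms by simp
qed

lemma norm_sum_mset_le: "norm (\<Sum>x\<in>#M. f x) \<le> (\<Sum>x\<in>#M. norm (f x :: 'a::real_normed_vector))"
proof (induct M)
  case empty then show ?case by simp
next
  case (add x M)
  have "norm (\<Sum>x\<in>#add_mset x M. f x) = norm (f x + (\<Sum>x\<in>#M. f x))" by simp
  also have "\<dots> \<le> norm (f x) + norm (\<Sum>x\<in>#M. f x)" by (rule norm_triangle_ineq)
  also have "\<dots> \<le> norm (f x) + (\<Sum>x\<in>#M. norm (f x))" using add by simp
  finally show ?case by simp
qed

lemma sum_mset_nonneg': "(\<And>x. x \<in># M \<Longrightarrow> 0 \<le> f x) \<Longrightarrow> 0 \<le> (\<Sum>x\<in>#M. (f x :: real))"
  by (induct M) auto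

context GC begin

definition "Q M = (\<Sum>x\<in>#M. \<Sum>y\<in>#M. g x y)"
definition "Psi \<delta> M = (\<Sum>x\<in>#M. c * rf \<delta> x)"

lemma sum_mset_add: "(\<Sum>x\<in>#M. f x + h x) = (\<Sum>x\<in>#M. f x) + (\<Sum>x\<in>#M. (h x :: 'b::comm_monoid_add))"
  by (induct M) (simp_all add: algebra_simps)

lemma Q_add: "Q (add_mset x M) = g x x + 2 * (\<Sum>w\<in>#M. g x w) + Q M"
proof -
  have "Q (add_mset x M) = (\<Sum>v\<in>#add_mset x M. g x v) + (\<Sum>u\<in>#M. \<Sum>v\<in>#add_mset x M. g u v)"
    unfolding Q_def by simp
  also have "(\<Sum>u\<in>#M. \<Sum>v\<in>#add_mset x M. g u v) = (\<Sum>u\<in>#M. g u x + (\<Sum>v\<in>#M. g u v))" by simp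
  also have "\<dots> = (\<Sum>u\<in>#M. g x u) + Q M" unfolding Q_def using g_sym by (simp add: sum_mset_add)
  finally show ?thesis by simp
qed

lemma Psi_add: "Psi \<delta> (add_mset x M) = c * rf \<delta> x + Psi \<delta> M" unfolding Psi_def by simp

lemma Q_add2: "Q (add_mset x (add_mset y M)) =
   (g x x + 2 * g x y + g y y) + 2 * (\<Sum>w\<in>#M. g x w + g y w) + Q M"
  by (simp add: Q_add sum_mset_add algebra_simps g_sym[of y x])

lemma g_pl1: assumes "has_t x" "has_t y" "has_t w" shows "g (\<lambda>t. x t + y t) w = g x w + g y w"
  unfolding g_def using rf_pl1[OF assms] by (simp add: distrib_left)

lemma desc: "set_mset M \<subseteq> C \<Longrightarrow> 0 \<le> Q M \<and> (\<forall>\<delta>\<in>R. rf \<delta> \<delta> = 0 \<longrightarrow> cmod (Psi \<delta> M) \<le> 2 * Q M)"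
proof (induct "size M" arbitrary: M rule: less_induct)
  case less
  show ?case
  proof (cases "\<exists>x y M'. M = add_mset x (add_mset y M') \<and> g x y < 0")
    case True
    then obtain x y M' where M: "M = add_mset x (add_mset y M')" and gxy: "g x y < 0" by blast
    have xC: "x \<in> C" and yC: "y \<in> C" and M'C: "set_mset M' \<subseteq> C" using less(2) M by auto
    have tx: "has_t x" and ty: "has_t y" using xC yC C_ht by auto
    have px: "c * rf x x = of_real (g x x)" "g x x > 0" using C_pos[OF xC] by auto
    have py: "c * rf y y = of_real (g y y)" "g y y > 0" using C_pos[OF yC] by auto
    have cxy: "c * rf x y = of_real (g x y)" using c_real_C xC yC by blast
    have cyx: "c * rf y x = of_real (g x y)" using cxy rf_sym[of y x] by simp
    obtain N where N: "cart y x = of_int N" using cart_int[OF C_Rx[OF xC] C_R[OF yC]] by blast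
    obtain Mi where Mi: "cart x y = of_int Mi" using cart_int[OF C_Rx[OF yC] C_R[OF xC]] by blast
    have ax: "rf x x \<noteq> 0" and ay: "rf y y \<noteq> 0" using xC yC C_Rx Rx_nz by auto
    have e1: "2 * rf y x = of_int N * rf x x" using cart_eq[OF ax N] .
    have e2: "2 * rf x y = of_int Mi * rf y y" using cart_eq[OF ay Mi] .
    have "2 * (c * rf y x) = of_int N * (c * rf x x)" using e1 by (metis mult.left_commute)
    hence "of_real (2 * g x y) = (of_real (of_int N * g x x) :: complex)" using cyx px(1) by simp
    hence ee: "2 * g x y = of_int N * g x x" by (simp only: of_real_eq_iff)
    have Nneg: "N < 0"
    proof (rule ccontr)
      assume "\<not> N < 0"
      hence "of_int N * g x x \<ge> 0" using px(2) by (intro mult_nonneg_nonneg) auto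
      thus False using ee gxy by linarith
    qed
    have "2 * (c * rf x y) = of_int Mi * (c * rf y y)" using e2 by (metis mult.left_commute)
    hence "of_real (2 * g x y) = (of_real (of_int Mi * g y y) :: complex)" using cxy py(1) by simp
    hence ee: "2 * g x y = of_int Mi * g y y" by (simp only: of_real_eq_iff)
    have Mneg: "Mi < 0"
    proof (rule ccontr)
      assume "\<not> Mi < 0"
      hence "of_int Mi * g y y \<ge> 0" using py(2) by (intro mult_nonneg_nonneg) auto
      thus False using ee gxy by linarith
    qed
    define z where "z = (\<lambda>t. x t + y t)"
    have "(\<lambda>t. y t - of_int (-1) * x t) \<in> R"
      by (rule step_root_neg[OF C_Rx[OF xC] C_R[OF yC] N]) (use Nneg in auto)
    moreover have "(\<lambda>t. y t - of_int (-1) * x t) = z" unfolding z_def by (auto simp: algebra_simps)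
    ultimately have zR: "z \<in> R" by simp
    have tz: "has_t z" using zR root_has_t by blast
    have zz: "rf z z = rf x x + 2 * rf x y + rf y y"
    proof -
      have "rf z z = rf x z + rf y z" unfolding z_def by (rule rf_pl1[OF tx ty tz[unfolded z_def]])
      also have "rf x z = rf x x + rf x y" unfolding z_def by (rule rf_pl2[OF tx ty tx])
      also have "rf y z = rf y x + rf y y" unfolding z_def by (rule rf_pl2[OF tx ty ty])
      finally show ?thesis using rf_sym[of y x] by simp
    qed
    show ?thesis
    proof (cases "rf z z = 0")
      case True
      have mnz: "rf x y \<noteq> 0" using cxy gxy by auto
      have "(2 * rf x y) * (of_int N + of_int Mi + of_int N * of_int Mi) = 0"
        using True zz e1 e2 rf_sym[of y x] by algebra
      hence "(of_int (N + Mi + N * Mi) :: complex) = 0" using mnz by simp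
      hence "N + Mi + N * Mi = 0" by (simp only: of_int_eq_0_iff)
      hence p: "(- N - 1) * (- Mi - 1) = 1" by (simp add: algebra_simps)
      have "- N - 1 \<noteq> 0" "- Mi - 1 \<noteq> 0" using p by auto
      hence "- N - 1 \<ge> 1" "- Mi - 1 \<ge> 1" using Nneg Mneg by auto
      hence "- N - 1 = 1" using int_prod1[OF _ _ p] by blast
      hence N2: "N = -2" by simp
      have aa: "rf x y = - rf x x" using e1 N2 rf_sym[of y x] by simp
      have bb: "rf y y = rf x x" using True zz aa by (simp add: algebra_simps)
      have T: "\<forall>u\<in>R. rf u x + rf u y = 0"
        using transl[OF C_Rx[OF xC] C_Rx[OF yC] bb aa] by blast
      have gs: "g x x + 2 * g x y + g y y = 0"
      proof -
        have "rf x x + 2 * rf x y + rf y y = 0" using True zz by simp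
        hence "c * rf x x + 2 * (c * rf x y) + c * rf y y = 0" by algebra
        hence "of_real (g x x) + 2 * of_real (g x y) + of_real (g y y) = (0::complex)" using px(1) py(1) cxy by simp
        hence "(of_real (g x x + 2 * g x y + g y y) :: complex) = 0" by simp
        thus ?thesis by (simp only: of_real_eq_0_iff)
      qed
      have gw: "g x w + g y w = 0" if "w \<in># M'" for w
      proof -
        have wC: "w \<in> C" using that M'C by auto
        have "rf w x + rf w y = 0" using T C_R[OF wC] by blast
        hence "rf x w + rf y w = 0" using rf_sym[of w x] rf_sym[of w y] by simp
        hence "c * (rf x w + rf y w) = 0" by simp
        hence "c * rf x w + c * rf y w = 0" by (simp only: distrib_left)
        from arg_cong[OF this, of Re] show ?thesis unfolding g_def by simp
      qed
      have "(\<Sum>w\<in>#M'. g x w + g y w) = (\<Sum>w\<in>#M'. 0)" by (rule arg_cong[where f=sum_mset], rule image_mset_cong) (use gw in auto)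
      hence QM: "Q M = Q M'" using gs M by (simp add: Q_add2)
      have PM: "Psi \<delta> M = Psi \<delta> M'" if "\<delta> \<in> R" for \<delta>
      proof -
        have "rf \<delta> x + rf \<delta> y = 0" using T that by blast
        hence "c * (rf \<delta> x + rf \<delta> y) = 0" by simp
        hence "c * rf \<delta> x + c * rf \<delta> y = 0" by (simp only: distrib_left)
        thus ?thesis using M by (simp add: Psi_add algebra_simps)
      qed
      have "size M' < size M" using M by simp
      hence IH: "0 \<le> Q M' \<and> (\<forall>\<delta>\<in>R. rf \<delta> \<delta> = 0 \<longrightarrow> cmod (Psi \<delta> M') \<le> 2 * Q M')" using less(1) M'C by blast
      thus ?thesis using QM PM by auto
    next
      case False
      hence zRx: "z \<in> Rx" using zR Rx_iff by blast
      have zC: "z \<in> C"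
      proof (cases "rf x z = 0")
        case True
        have "rf z z = rf x z + rf y z" unfolding z_def by (rule rf_pl1[OF tx ty tz[unfolded z_def]])
        hence "rf y z \<noteq> 0" using True False by simp
        thus ?thesis using C_link[OF yC zRx] by blast
      next
        case False thus ?thesis using C_link[OF xC zRx] by blast
      qed
      define M2 where "M2 = add_mset z M'"
      have M2C: "set_mset M2 \<subseteq> C" using zC M'C M2_def by auto
      have "size M2 < size M" using M M2_def by simp
      hence IH: "0 \<le> Q M2 \<and> (\<forall>\<delta>\<in>R. rf \<delta> \<delta> = 0 \<longrightarrow> cmod (Psi \<delta> M2) \<le> 2 * Q M2)" using less(1) M2C by blast
      have gz: "g z w = g x w + g y w" if "has_t w" for w unfolding z_def by (rule g_pl1[OF tx ty that])
      have gzz: "g z z = g x x + 2 * g x y + g y y"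
        using gz[OF tz] g_sym[of z x] g_sym[of z y] gz[OF tx] gz[OF ty] g_sym[of y x] by simp
      have "(\<Sum>w\<in>#M'. g z w) = (\<Sum>w\<in>#M'. g x w + g y w)"
        by (rule arg_cong[where f=sum_mset], rule image_mset_cong) (use gz M'C C_ht in auto)
      hence QM: "Q M = Q M2" unfolding M2_def using M gzz by (simp add: Q_add2 Q_add sum_mset_add)
      have PM: "Psi \<delta> M = Psi \<delta> M2" if "\<delta> \<in> R" for \<delta>
      proof -
        have "rf \<delta> z = rf \<delta> x + rf \<delta> y" unfolding z_def by (rule rf_pl2[OF tx ty root_has_t[OF that]])
        thus ?thesis using M M2_def by (simp add: Psi_add algebra_simps)
      qed
      show ?thesis using IH QM PM by auto
    qed
  next
    case False
    have nn: "g x y \<ge> 0" if "x \<in># M" "y \<in># M - {#x#}" for x y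
    proof -
      have h1: "add_mset y (M - {#x#} - {#y#}) = M - {#x#}" using that(2) by (rule insert_DiffM)
      have h2: "add_mset x (M - {#x#}) = M" using that(1) by (rule insert_DiffM)
      have MM: "M = add_mset x (add_mset y (M - {#x#} - {#y#}))" by (simp only: h1 h2)
      show ?thesis
      proof (rule ccontr)
        assume "\<not> g x y \<ge> 0"
        hence "g x y < 0" by simp
        thus False using False MM by blast
      qed
    qed
    have rowge: "(\<Sum>y\<in>#M. g x y) \<ge> g x x" if "x \<in># M" for x
    proof -
      have eq: "add_mset x (M - {#x#}) = M" using that by simp
      have "(\<Sum>y\<in>#add_mset x (M - {#x#}). g x y) = g x x + (\<Sum>y\<in>#M - {#x#}. g x y)" by simp
      hence "(\<Sum>y\<in>#M. g x y) = g x x + (\<Sum>y\<in>#M - {#x#}. g x y)" by (simp only: eq)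
      moreover have "(\<Sum>y\<in>#M - {#x#}. g x y) \<ge> 0" by (rule sum_mset_nonneg') (use nn that in auto)
      ultimately show ?thesis by simp
    qed
    have Qge: "Q M \<ge> (\<Sum>x\<in>#M. g x x)" unfolding Q_def using rowge by (intro sum_mset_mono) auto
    have diag: "g x x > 0" if "x \<in># M" for x using C_pos less(2) that by auto
    have "(\<Sum>x\<in>#M. g x x) \<ge> 0" by (rule sum_mset_nonneg') (use diag in \<open>auto simp: less_imp_le\<close>)
    moreover have "cmod (Psi \<delta> M) \<le> 2 * Q M" if d: "\<delta> \<in> R" "rf \<delta> \<delta> = 0" for \<delta>
    proof -
      have each: "cmod (c * rf \<delta> x) \<le> 2 * g x x" if "x \<in># M" for x
      proof -
        have xC: "x \<in> C" using that less(2) by auto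
        obtain N :: int where N: "cart \<delta> x = of_int N" "\<bar>N\<bar> \<le> 4" using Cbnd[OF d(1) C_Rx[OF xC]] by blast
        have "2 * rf \<delta> x = of_int N * rf x x" using cart_eq[OF Rx_nz[OF C_Rx[OF xC]] N(1)] .
        hence "2 * (c * rf \<delta> x) = of_int N * (c * rf x x)" by (simp add: algebra_simps)
        hence "2 * cmod (c * rf \<delta> x) = \<bar>of_int N\<bar> * \<bar>g x x\<bar>" using C_pos[OF xC]
          by (metis norm_mult norm_numeral norm_of_int norm_of_real)
        moreover have "\<bar>(of_int N :: real)\<bar> \<le> 4" using N(2) by linarith
        moreover have "g x x > 0" using C_pos[OF xC] by blast
        ultimately have "\<bar>(of_int N :: real)\<bar> * \<bar>g x x\<bar> \<le> 4 * \<bar>g x x\<bar>" by (intro mult_right_mono) auto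
        moreover have "\<bar>g x x\<bar> = g x x" using \<open>g x x > 0\<close> by simp
        ultimately show ?thesis using \<open>2 * cmod (c * rf \<delta> x) = \<bar>of_int N\<bar> * \<bar>g x x\<bar>\<close> by linarith
      qed
      have "cmod (Psi \<delta> M) \<le> (\<Sum>x\<in>#M. cmod (c * rf \<delta> x))" unfolding Psi_def by (rule norm_sum_mset_le)
      also have "\<dots> \<le> (\<Sum>x\<in>#M. 2 * g x x)" using each by (intro sum_mset_mono) auto
      also have "\<dots> = 2 * (\<Sum>x\<in>#M. g x x)" by (simp add: sum_mset_distrib_left)
      finally show ?thesis using Qge by simp
    qed
    ultimately show ?thesis using Qge by auto
  qed
qed

end

lemma sum_mset_rep: "(\<Sum>x\<in>#replicate_mset n v. h x) = of_nat n * (h v :: 'b::semiring_1)"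
  by (induct n) (simp_all add: algebra_simps)

definition "MSx F (k::'a \<Rightarrow> int) (ng :: 'a \<Rightarrow> 'a) = (\<Sum>\<beta>\<in>F. replicate_mset (nat \<bar>k \<beta>\<bar>) (if 0 \<le> k \<beta> then \<beta> else ng \<beta>))"

lemma MS_sum: assumes "finite F" "\<forall>\<beta>\<in>F. h (ng \<beta>) = - h \<beta>"
  shows "(\<Sum>x\<in>#MSx F k ng. h x) = (\<Sum>\<beta>\<in>F. of_int (k \<beta>) * (h \<beta> :: 'b::comm_ring_1))"
  using assms unfolding MSx_def
proof (induct F rule: finite_induct)
  case empty then show ?case by simp
next
  case (insert b F)
  have "(\<Sum>x\<in>#replicate_mset (nat \<bar>k b\<bar>) (if 0 \<le> k b then b else ng b). h x) = of_int (k b) * h b"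
  proof (cases "0 \<le> k b")
    case True thus ?thesis by (simp add: sum_mset_rep)
  next
    case False
    hence "(\<Sum>x\<in>#replicate_mset (nat \<bar>k b\<bar>) (if 0 \<le> k b then b else ng b). h x) = of_nat (nat (- k b)) * h (ng b)"
      by (simp add: sum_mset_rep)
    also have "\<dots> = of_int (k b) * h b" using False insert(4) by simp
    finally show ?thesis .
  qed
  moreover have "(\<Sum>x\<in>#(\<Sum>\<beta>\<in>F. replicate_mset (nat \<bar>k \<beta>\<bar>) (if 0 \<le> k \<beta> then \<beta> else ng \<beta>)). h x) = (\<Sum>\<beta>\<in>F. of_int (k \<beta>) * h \<beta>)"
    using insert by simp
  ultimately show ?case using insert(1,2) by simp
qed

context GC begin

definition "V F r = (\<lambda>x. \<Sum>\<beta>\<in>F. complex_of_real (r \<beta>) * \<beta> x)"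
definition "Bf F u w = (\<Sum>\<beta>\<in>F. \<Sum>\<beta>'\<in>F. u \<beta> * w \<beta>' * g \<beta> \<beta>')"

lemma rf_sum1: assumes "finite F" "\<forall>\<beta>\<in>F. has_t \<beta>" "has_t w"
  shows "rf (\<lambda>x. \<Sum>\<beta>\<in>F. a \<beta> * \<beta> x) w = (\<Sum>\<beta>\<in>F. a \<beta> * rf \<beta> w)"
proof -
  have "rf (\<lambda>x. \<Sum>\<beta>\<in>F. a \<beta> * \<beta> x) w = (\<Sum>\<beta>\<in>F. a \<beta> * \<beta> (tv w))"
    using rf_app[OF has_t_sum[OF assms(1,2)] assms(3)] by simp
  also have "\<dots> = (\<Sum>\<beta>\<in>F. a \<beta> * rf \<beta> w)"
  proof (rule sum.cong[OF refl])
    fix \<beta> assume "\<beta> \<in> F"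
    hence "rf \<beta> w = \<beta> (tv w)" using rf_app assms(2,3) by blast
    thus "a \<beta> * \<beta> (tv w) = a \<beta> * rf \<beta> w" by simp
  qed
  finally show ?thesis .
qed

lemma rf_sum2: assumes "finite F" "\<forall>\<beta>\<in>F. has_t \<beta>" "has_t w"
  shows "rf w (\<lambda>x. \<Sum>\<beta>\<in>F. a \<beta> * \<beta> x) = (\<Sum>\<beta>\<in>F. a \<beta> * rf w \<beta>)"
proof -
  have "rf w (\<lambda>x. \<Sum>\<beta>\<in>F. a \<beta> * \<beta> x) = rf (\<lambda>x. \<Sum>\<beta>\<in>F. a \<beta> * \<beta> x) w" by (rule rf_sym)
  also have "\<dots> = (\<Sum>\<beta>\<in>F. a \<beta> * rf \<beta> w)" by (rule rf_sum1[OF assms])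
  also have "\<dots> = (\<Sum>\<beta>\<in>F. a \<beta> * rf w \<beta>)" by (rule sum.cong[OF refl]) (simp only: rf_sym[of _ w])
  finally show ?thesis .
qed

lemma V_ht: assumes "finite F" "F \<subseteq> C" shows "has_t (V F r)"
  unfolding V_def by (rule has_t_sum[OF assms(1)]) (use assms(2) C_ht in blast)

lemma conn: assumes F: "finite F" "F \<subseteq> C"
  shows "c * rf (V F u) (V F w) = of_real (Bf F u w)"
proof -
  have ht: "\<forall>\<beta>\<in>F. has_t \<beta>" using F C_ht by blast
  have "rf (V F u) (V F w) = (\<Sum>\<beta>\<in>F. of_real (u \<beta>) * rf \<beta> (V F w))"
    unfolding V_def by (rule rf_sum1[OF F(1) ht V_ht[OF F, unfolded V_def]])
  also have "\<dots> = (\<Sum>\<beta>\<in>F. of_real (u \<beta>) * (\<Sum>\<beta>'\<in>F. of_real (w \<beta>') * rf \<beta> \<beta>'))"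
  proof (rule sum.cong[OF refl])
    fix \<beta> assume "\<beta> \<in> F"
    hence "has_t \<beta>" using ht by blast
    thus "of_real (u \<beta>) * rf \<beta> (V F w) = of_real (u \<beta>) * (\<Sum>\<beta>'\<in>F. of_real (w \<beta>') * rf \<beta> \<beta>')"
      unfolding V_def using rf_sum2[OF F(1) ht] by simp
  qed
  finally have "c * rf (V F u) (V F w) = c * (\<Sum>\<beta>\<in>F. of_real (u \<beta>) * (\<Sum>\<beta>'\<in>F. of_real (w \<beta>') * rf \<beta> \<beta>'))"
    by simp
  also have "\<dots> = (\<Sum>\<beta>\<in>F. \<Sum>\<beta>'\<in>F. c * (of_real (u \<beta>) * (of_real (w \<beta>') * rf \<beta> \<beta>')))"
    by (simp add: sum_distrib_left)
  also have "\<dots> = (\<Sum>\<beta>\<in>F. \<Sum>\<beta>'\<in>F. of_real (u \<beta> * w \<beta>') * (c * rf \<beta> \<beta>'))"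
    by (intro sum.cong refl) (simp add: mult_ac)
  also have "\<dots> = (\<Sum>\<beta>\<in>F. \<Sum>\<beta>'\<in>F. of_real (u \<beta> * w \<beta>' * g \<beta> \<beta>'))"
  proof (intro sum.cong refl)
    fix \<beta> \<beta>' assume "\<beta> \<in> F" "\<beta>' \<in> F"
    hence "c * rf \<beta> \<beta>' = of_real (g \<beta> \<beta>')" using c_real_C F(2) by blast
    thus "of_real (u \<beta> * w \<beta>') * (c * rf \<beta> \<beta>') = of_real (u \<beta> * w \<beta>' * g \<beta> \<beta>')" by simp
  qed
  finally show ?thesis unfolding Bf_def by simp
qed

definition "MS F k = MSx F k (\<lambda>\<beta> z. - \<beta> z)"

lemma MS_C: assumes "finite F" "F \<subseteq> C" shows "set_mset (MS F k) \<subseteq> C"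
  using assms unfolding MS_def MSx_def
proof (induct F rule: finite_induct)
  case empty then show ?case by simp
next
  case (insert b F)
  let ?R = "\<lambda>\<beta>. replicate_mset (nat \<bar>k \<beta>\<bar>) (if 0 \<le> k \<beta> then \<beta> else (\<lambda>z. - \<beta> z))"
  have bC: "b \<in> C" using insert(4) by blast
  have "(if 0 \<le> k b then b else (\<lambda>z. - b z)) \<in> C" using bC C_neg by simp
  hence 1: "set_mset (?R b) \<subseteq> C" by simp
  have 2: "set_mset (\<Sum>\<beta>\<in>F. ?R \<beta>) \<subseteq> C" using insert(3,4) by blast
  have "(\<Sum>\<beta>\<in>insert b F. ?R \<beta>) = ?R b + (\<Sum>\<beta>\<in>F. ?R \<beta>)" by (rule sum.insert[OF insert(1,2)])
  thus ?case using 1 2 by (simp only: set_mset_union Un_subset_iff)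
qed

lemma g_negR: "has_t x \<Longrightarrow> has_t \<beta> \<Longrightarrow> g x (\<lambda>z. - \<beta> z) = - g x \<beta>"
  unfolding g_def using rf_neg2 by simp
lemma g_negL: "has_t x \<Longrightarrow> has_t \<beta> \<Longrightarrow> g (\<lambda>z. - \<beta> z) x = - g \<beta> x"
  unfolding g_def using rf_neg1 by simp

lemma Q_MS: assumes F: "finite F" "F \<subseteq> C"
  shows "Q (MS F k) = Bf F (\<lambda>\<beta>. of_int (k \<beta>)) (\<lambda>\<beta>. of_int (k \<beta>))"
proof -
  have ht: "\<forall>\<beta>\<in>F. has_t \<beta>" using F C_ht by blast
  have MSht: "\<forall>x\<in>#MS F k. has_t x" using MS_C[OF F] C_ht by blast
  have inner: "(\<Sum>y\<in>#MS F k. g x y) = (\<Sum>\<beta>'\<in>F. of_int (k \<beta>') * g x \<beta>')" if "has_t x" for x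
    unfolding MS_def
  proof (rule MS_sum[OF F(1)])
    show "\<forall>\<beta>\<in>F. g x (\<lambda>z. - \<beta> z) = - g x \<beta>" using g_negR[OF that] ht by blast
  qed
  have "Q (MS F k) = (\<Sum>x\<in>#MS F k. \<Sum>\<beta>'\<in>F. of_int (k \<beta>') * g x \<beta>')"
    unfolding Q_def
  proof (intro arg_cong[where f=sum_mset] image_mset_cong)
    fix x assume "x \<in># MS F k"
    hence "has_t x" using MSht by blast
    thus "(\<Sum>y\<in>#MS F k. g x y) = (\<Sum>\<beta>'\<in>F. of_int (k \<beta>') * g x \<beta>')" by (rule inner)
  qed
  also have "\<dots> = (\<Sum>\<beta>\<in>F. of_int (k \<beta>) * (\<Sum>\<beta>'\<in>F. of_int (k \<beta>') * g \<beta> \<beta>'))"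
  proof (unfold MS_def, rule MS_sum[OF F(1)])
    show "\<forall>\<beta>\<in>F. (\<Sum>\<beta>'\<in>F. of_int (k \<beta>') * g (\<lambda>z. - \<beta> z) \<beta>') = - (\<Sum>\<beta>'\<in>F. of_int (k \<beta>') * g \<beta> \<beta>')"
    proof
      fix \<beta> assume b: "\<beta> \<in> F"
      have "(\<Sum>\<beta>'\<in>F. of_int (k \<beta>') * g (\<lambda>z. - \<beta> z) \<beta>') = (\<Sum>\<beta>'\<in>F. - (of_int (k \<beta>') * g \<beta> \<beta>'))"
      proof (rule sum.cong[OF refl])
        fix \<beta>' assume "\<beta>' \<in> F"
        hence "g (\<lambda>z. - \<beta> z) \<beta>' = - g \<beta> \<beta>'" using g_negL ht b by blast
        thus "of_int (k \<beta>') * g (\<lambda>z. - \<beta> z) \<beta>' = - (of_int (k \<beta>') * g \<beta> \<beta>')" by simp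
      qed
      thus "(\<Sum>\<beta>'\<in>F. of_int (k \<beta>') * g (\<lambda>z. - \<beta> z) \<beta>') = - (\<Sum>\<beta>'\<in>F. of_int (k \<beta>') * g \<beta> \<beta>')"
        by (simp add: sum_negf)
    qed
  qed
  finally show ?thesis unfolding Bf_def by (simp add: sum_distrib_left mult.assoc)
qed

lemma Psi_MS: assumes F: "finite F" "F \<subseteq> C" and d: "has_t \<delta>"
  shows "Psi \<delta> (MS F k) = (\<Sum>\<beta>\<in>F. of_int (k \<beta>) * (c * rf \<delta> \<beta>))"
  unfolding Psi_def MS_def
proof (rule MS_sum[OF F(1)])
  show "\<forall>\<beta>\<in>F. c * rf \<delta> (\<lambda>z. - \<beta> z) = - (c * rf \<delta> \<beta>)"
  proof
    fix \<beta> assume "\<beta> \<in> F"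
    hence "has_t \<beta>" using F C_ht by blast
    thus "c * rf \<delta> (\<lambda>z. - \<beta> z) = - (c * rf \<delta> \<beta>)" using rf_neg2[OF _ d] by simp
  qed
qed

end

context GC begin

lemma Bf_exp: "Bf F (\<lambda>\<beta>. t * r \<beta> - e \<beta>) (\<lambda>\<beta>. t * r \<beta> - e \<beta>) =
   t^2 * Bf F r r - t * (Bf F r e + Bf F e r) + Bf F e e"
proof -
  have "Bf F (\<lambda>\<beta>. t * r \<beta> - e \<beta>) (\<lambda>\<beta>. t * r \<beta> - e \<beta>) =
    (\<Sum>\<beta>\<in>F. \<Sum>\<beta>'\<in>F. t^2 * (r \<beta> * r \<beta>' * g \<beta> \<beta>') - t * (r \<beta> * e \<beta>' * g \<beta> \<beta>' + e \<beta> * r \<beta>' * g \<beta> \<beta>') + e \<beta> * e \<beta>' * g \<beta> \<beta>')"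
    unfolding Bf_def by (intro sum.cong refl) (simp add: algebra_simps power2_eq_square)
  also have "\<dots> = t^2 * Bf F r r - t * (Bf F r e + Bf F e r) + Bf F e e"
    unfolding Bf_def by (simp add: sum.distrib sum_subtractf sum_distrib_left distrib_left)
  finally show ?thesis .
qed

lemma Bf_abs: assumes "\<forall>\<beta>\<in>F. \<bar>u \<beta>\<bar> \<le> U \<beta>" "\<forall>\<beta>\<in>F. \<bar>v \<beta>\<bar> \<le> W \<beta>"
  shows "\<bar>Bf F u v\<bar> \<le> (\<Sum>\<beta>\<in>F. \<Sum>\<beta>'\<in>F. U \<beta> * W \<beta>' * \<bar>g \<beta> \<beta>'\<bar>)"
proof -
  have "\<bar>Bf F u v\<bar> \<le> (\<Sum>\<beta>\<in>F. \<bar>\<Sum>\<beta>'\<in>F. u \<beta> * v \<beta>' * g \<beta> \<beta>'\<bar>)" unfolding Bf_def by (rule sum_abs)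
  also have "\<dots> \<le> (\<Sum>\<beta>\<in>F. \<Sum>\<beta>'\<in>F. \<bar>u \<beta> * v \<beta>' * g \<beta> \<beta>'\<bar>)" by (intro sum_mono sum_abs)
  also have "\<dots> \<le> (\<Sum>\<beta>\<in>F. \<Sum>\<beta>'\<in>F. U \<beta> * W \<beta>' * \<bar>g \<beta> \<beta>'\<bar>)"
  proof (intro sum_mono)
    fix \<beta> \<beta>' assume b: "\<beta> \<in> F" "\<beta>' \<in> F"
    have "\<bar>u \<beta>\<bar> * \<bar>v \<beta>'\<bar> \<le> U \<beta> * W \<beta>'" using assms b by (intro mult_mono) auto
    hence "\<bar>u \<beta>\<bar> * \<bar>v \<beta>'\<bar> * \<bar>g \<beta> \<beta>'\<bar> \<le> U \<beta> * W \<beta>' * \<bar>g \<beta> \<beta>'\<bar>" by (intro mult_right_mono) auto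
    thus "\<bar>u \<beta> * v \<beta>' * g \<beta> \<beta>'\<bar> \<le> U \<beta> * W \<beta>' * \<bar>g \<beta> \<beta>'\<bar>" by (simp add: abs_mult)
  qed
  finally show ?thesis .
qed

lemma floor_parts: "real_of_int \<lfloor>x\<rfloor> = x - (x - real_of_int \<lfloor>x\<rfloor>) \<and> \<bar>x - real_of_int \<lfloor>x\<rfloor>\<bar> \<le> 1"
  by (simp add: abs_if) linarith

lemma desc_Bf: assumes F: "finite F" "F \<subseteq> C"
  shows "0 \<le> Bf F (\<lambda>\<beta>. of_int (k \<beta>)) (\<lambda>\<beta>. of_int (k \<beta>))"
  using desc[OF MS_C[OF F]] Q_MS[OF F] by simp

lemma psd_coef: assumes F: "finite F" "F \<subseteq> C" shows "0 \<le> Bf F r r"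
proof (rule ccontr)
  assume "\<not> 0 \<le> Bf F r r"
  hence A: "Bf F r r < 0" by simp
  define K1 where "K1 = (\<Sum>\<beta>\<in>F. \<Sum>\<beta>'\<in>F. \<bar>r \<beta>\<bar> * 1 * \<bar>g \<beta> \<beta>'\<bar>)"
  define K1' where "K1' = (\<Sum>\<beta>\<in>F. \<Sum>\<beta>'\<in>F. 1 * \<bar>r \<beta>'\<bar> * \<bar>g \<beta> \<beta>'\<bar>)"
  define K2 where "K2 = (\<Sum>\<beta>\<in>F. \<Sum>\<beta>'\<in>F. 1 * 1 * \<bar>g \<beta> \<beta>'\<bar>)"
  have K2p: "K2 \<ge> 0" unfolding K2_def by (intro sum_nonneg) auto
  have K1p: "K1 \<ge> 0" unfolding K1_def by (intro sum_nonneg) auto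
  have K1p': "K1' \<ge> 0" unfolding K1'_def by (intro sum_nonneg) auto
  define K where "K = K1 + K1' + K2"
  define t :: nat where "t = nat \<lceil>K / (- Bf F r r)\<rceil> + 1"
  have t1: "real t \<ge> 1" unfolding t_def by simp
  have "real t > K / (- Bf F r r)" unfolding t_def by linarith
  hence tA: "real t * Bf F r r + K < 0" using A by (simp add: field_simps)
  define k where "k = (\<lambda>\<beta>. \<lfloor>real t * r \<beta>\<rfloor>)"
  define e where "e = (\<lambda>\<beta>. real t * r \<beta> - real_of_int (k \<beta>))"
  have ke: "(\<lambda>\<beta>. real_of_int (k \<beta>)) = (\<lambda>\<beta>. real t * r \<beta> - e \<beta>)" unfolding e_def by simp
  have eb: "\<forall>\<beta>\<in>F. \<bar>e \<beta>\<bar> \<le> 1" unfolding e_def k_def using floor_parts by blast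
  have "0 \<le> Bf F (\<lambda>\<beta>. real t * r \<beta> - e \<beta>) (\<lambda>\<beta>. real t * r \<beta> - e \<beta>)"
    using desc_Bf[OF F, of k] ke by simp
  also have "\<dots> = (real t)^2 * Bf F r r - real t * (Bf F r e + Bf F e r) + Bf F e e" by (rule Bf_exp)
  finally have 0: "0 \<le> (real t)^2 * Bf F r r - real t * (Bf F r e + Bf F e r) + Bf F e e" .
  have b1: "\<bar>Bf F r e\<bar> \<le> K1" unfolding K1_def by (rule Bf_abs) (use eb in auto)
  have b2: "\<bar>Bf F e r\<bar> \<le> K1'" unfolding K1'_def by (rule Bf_abs) (use eb in auto)
  have b3: "\<bar>Bf F e e\<bar> \<le> K2" unfolding K2_def by (rule Bf_abs) (use eb in auto)
  have "- real t * (Bf F r e + Bf F e r) \<le> real t * (K1 + K1')"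
  proof -
    have "- (Bf F r e + Bf F e r) \<le> K1 + K1'" using b1 b2 by linarith
    hence "real t * (- (Bf F r e + Bf F e r)) \<le> real t * (K1 + K1')" by (intro mult_left_mono) auto
    thus ?thesis by (simp only: mult_minus_left mult_minus_right)
  qed
  moreover have "Bf F e e \<le> real t * K2"
  proof -
    have "1 * K2 \<le> real t * K2" using t1 K2p by (intro mult_right_mono) auto
    thus ?thesis using b3 by linarith
  qed
  ultimately have "0 \<le> (real t)^2 * Bf F r r + real t * K" using 0 unfolding K_def by (simp add: algebra_simps)
  also have "\<dots> = real t * (real t * Bf F r r + K)" by (simp add: power2_eq_square algebra_simps)
  also have "\<dots> < 0" using tA t1 by (simp add: mult_pos_neg)
  finally show False by simp
qed

end

context GC begin

lemma iso_coef: assumes F: "finite F" "F \<subseteq> C" and d: "\<delta> \<in> R" "rf \<delta> \<delta> = 0"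
  and rows: "\<forall>\<beta>'\<in>F. (\<Sum>\<beta>\<in>F. r \<beta> * g \<beta> \<beta>') = 0"
  shows "(\<Sum>\<beta>\<in>F. of_real (r \<beta>) * (c * rf \<delta> \<beta>)) = 0"
proof (rule ccontr)
  define \<Psi> where "\<Psi> = (\<Sum>\<beta>\<in>F. of_real (r \<beta>) * (c * rf \<delta> \<beta>))"
  assume "\<not> (\<Sum>\<beta>\<in>F. of_real (r \<beta>) * (c * rf \<delta> \<beta>)) = 0"
  hence Pnz: "cmod \<Psi> > 0" unfolding \<Psi>_def by simp
  have td: "has_t \<delta>" using d root_has_t by blast
  have BL0: "Bf F r w = 0" for w
  proof -
    have "Bf F r w = (\<Sum>\<beta>'\<in>F. \<Sum>\<beta>\<in>F. w \<beta>' * (r \<beta> * g \<beta> \<beta>'))"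
      unfolding Bf_def by (subst sum.swap) (simp add: mult_ac)
    also have "\<dots> = (\<Sum>\<beta>'\<in>F. w \<beta>' * (\<Sum>\<beta>\<in>F. r \<beta> * g \<beta> \<beta>'))" by (simp add: sum_distrib_left)
    also have "\<dots> = 0" using rows by simp
    finally show ?thesis .
  qed
  have BR0: "Bf F w r = 0" for w
  proof -
    have "Bf F w r = (\<Sum>\<beta>\<in>F. w \<beta> * (\<Sum>\<beta>'\<in>F. r \<beta>' * g \<beta>' \<beta>))"
      unfolding Bf_def by (simp add: sum_distrib_left mult_ac g_sym)
    also have "\<dots> = 0" using rows by simp
    finally show ?thesis .
  qed
  define K2 where "K2 = (\<Sum>\<beta>\<in>F. \<Sum>\<beta>'\<in>F. 1 * 1 * \<bar>g \<beta> \<beta>'\<bar>)"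
  define Kp where "Kp = (\<Sum>\<beta>\<in>F. cmod (c * rf \<delta> \<beta>))"
  define t :: nat where "t = nat \<lceil>(2 * K2 + Kp) / cmod \<Psi>\<rceil> + 1"
  have "real t > (2 * K2 + Kp) / cmod \<Psi>" unfolding t_def by linarith
  hence tbig: "real t * cmod \<Psi> > 2 * K2 + Kp" using Pnz by (simp add: field_simps)
  define k where "k = (\<lambda>\<beta>. \<lfloor>real t * r \<beta>\<rfloor>)"
  define e where "e = (\<lambda>\<beta>. real t * r \<beta> - real_of_int (k \<beta>))"
  have ke: "(\<lambda>\<beta>. real_of_int (k \<beta>)) = (\<lambda>\<beta>. real t * r \<beta> - e \<beta>)" unfolding e_def by simp
  have eb: "\<forall>\<beta>\<in>F. \<bar>e \<beta>\<bar> \<le> 1" unfolding e_def k_def using floor_parts by blast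
  have "Q (MS F k) = Bf F (\<lambda>\<beta>. real t * r \<beta> - e \<beta>) (\<lambda>\<beta>. real t * r \<beta> - e \<beta>)"
    using Q_MS[OF F, of k] ke by simp
  also have "\<dots> = (real t)^2 * Bf F r r - real t * (Bf F r e + Bf F e r) + Bf F e e" by (rule Bf_exp)
  also have "\<dots> = Bf F e e" using BL0 BR0 by simp
  finally have QB: "Q (MS F k) = Bf F e e" .
  have b3: "\<bar>Bf F e e\<bar> \<le> K2" unfolding K2_def by (rule Bf_abs) (use eb in auto)
  have "cmod (Psi \<delta> (MS F k)) \<le> 2 * Q (MS F k)" using desc[OF MS_C[OF F]] d by blast
  hence P1: "cmod (Psi \<delta> (MS F k)) \<le> 2 * K2" using QB b3 by linarith
  have "Psi \<delta> (MS F k) = (\<Sum>\<beta>\<in>F. of_int (k \<beta>) * (c * rf \<delta> \<beta>))" by (rule Psi_MS[OF F td])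
  also have "\<dots> = (\<Sum>\<beta>\<in>F. (of_real (real t) * of_real (r \<beta>) - of_real (e \<beta>)) * (c * rf \<delta> \<beta>))"
  proof (rule sum.cong[OF refl])
    fix \<beta> assume "\<beta> \<in> F"
    have "(of_int (k \<beta>) :: complex) = of_real (real_of_int (k \<beta>))" by simp
    also have "\<dots> = of_real (real t * r \<beta> - e \<beta>)" unfolding e_def by simp
    also have "\<dots> = of_real (real t) * of_real (r \<beta>) - of_real (e \<beta>)" by simp
    finally show "of_int (k \<beta>) * (c * rf \<delta> \<beta>) = (of_real (real t) * of_real (r \<beta>) - of_real (e \<beta>)) * (c * rf \<delta> \<beta>)" by simp
  qed
  also have "\<dots> = of_real (real t) * \<Psi> - (\<Sum>\<beta>\<in>F. of_real (e \<beta>) * (c * rf \<delta> \<beta>))"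
    unfolding \<Psi>_def by (simp add: left_diff_distrib sum_subtractf sum_distrib_left mult.assoc)
  finally have PE: "Psi \<delta> (MS F k) = of_real (real t) * \<Psi> - (\<Sum>\<beta>\<in>F. of_real (e \<beta>) * (c * rf \<delta> \<beta>))" .
  have "cmod (\<Sum>\<beta>\<in>F. of_real (e \<beta>) * (c * rf \<delta> \<beta>)) \<le> (\<Sum>\<beta>\<in>F. cmod (of_real (e \<beta>) * (c * rf \<delta> \<beta>)))"
    by (rule norm_sum)
  also have "\<dots> \<le> Kp" unfolding Kp_def
  proof (rule sum_mono)
    fix \<beta> assume "\<beta> \<in> F"
    hence "\<bar>e \<beta>\<bar> \<le> 1" using eb by blast
    hence "\<bar>e \<beta>\<bar> * cmod (c * rf \<delta> \<beta>) \<le> 1 * cmod (c * rf \<delta> \<beta>)" by (intro mult_right_mono) auto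
    thus "cmod (of_real (e \<beta>) * (c * rf \<delta> \<beta>)) \<le> cmod (c * rf \<delta> \<beta>)" by (simp add: norm_mult)
  qed
  finally have E: "cmod (\<Sum>\<beta>\<in>F. of_real (e \<beta>) * (c * rf \<delta> \<beta>)) \<le> Kp" .
  have "cmod (of_real (real t) * \<Psi>) \<le> cmod (Psi \<delta> (MS F k)) + cmod (\<Sum>\<beta>\<in>F. of_real (e \<beta>) * (c * rf \<delta> \<beta>))"
    using PE norm_triangle_ineq[of "Psi \<delta> (MS F k)" "\<Sum>\<beta>\<in>F. of_real (e \<beta>) * (c * rf \<delta> \<beta>)"] by simp
  moreover have "cmod (of_real (real t) * \<Psi>) = real t * cmod \<Psi>" by (simp add: norm_mult)
  ultimately show False using P1 E tbig by linarith
qed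

lemma rs_V: assumes "v \<in> real_span C" obtains F r where "finite F" "F \<subseteq> C" "v = V F r"
  using assms unfolding real_span_def V_def by blast

lemma psd_fun: assumes "v \<in> real_span C" shows "0 \<le> Re (c * rf v v)"
proof -
  obtain F r where F: "finite F" "F \<subseteq> C" "v = V F r" using rs_V assms by blast
  show ?thesis using conn[OF F(1,2), of r r] psd_coef[OF F(1,2), of r] F(3) by simp
qed

lemma rs_add: assumes v: "v \<in> real_span C" and b: "\<beta>' \<in> C"
  shows "(\<lambda>x. v x + of_real s * \<beta>' x) \<in> real_span C"
proof -
  obtain F r where F: "finite F" "F \<subseteq> C" "v = V F r" using rs_V v by blast
  define F' where "F' = insert \<beta>' F"
  define r' where "r' = (\<lambda>\<beta>. (if \<beta> \<in> F then r \<beta> else 0) + (if \<beta> = \<beta>' then s else 0))"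
  have fin: "finite F'" and sub: "F' \<subseteq> C" using F b F'_def by auto
  have "(\<lambda>x. v x + of_real s * \<beta>' x) = (\<lambda>x. \<Sum>\<beta>\<in>F'. complex_of_real (r' \<beta>) * \<beta> x)"
  proof
    fix x
    have "(\<Sum>\<beta>\<in>F'. complex_of_real (r' \<beta>) * \<beta> x) =
          (\<Sum>\<beta>\<in>F'. complex_of_real (if \<beta> \<in> F then r \<beta> else 0) * \<beta> x) + (\<Sum>\<beta>\<in>F'. (if \<beta> = \<beta>' then of_real s * \<beta> x else 0))"
    proof -
      have "(\<Sum>\<beta>\<in>F'. complex_of_real (r' \<beta>) * \<beta> x) = (\<Sum>\<beta>\<in>F'. complex_of_real (if \<beta> \<in> F then r \<beta> else 0) * \<beta> x + (if \<beta> = \<beta>' then of_real s * \<beta> x else 0))"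
        by (intro sum.cong refl) (simp add: r'_def distrib_right)
      thus ?thesis by (simp only: sum.distrib)
    qed
    also have "(\<Sum>\<beta>\<in>F'. complex_of_real (if \<beta> \<in> F then r \<beta> else 0) * \<beta> x) = (\<Sum>\<beta>\<in>F. complex_of_real (if \<beta> \<in> F then r \<beta> else 0) * \<beta> x)"
      by (rule sum.mono_neutral_right) (use fin F'_def in auto)
    also have "\<dots> = (\<Sum>\<beta>\<in>F. complex_of_real (r \<beta>) * \<beta> x)" by (rule sum.cong) auto
    also have "(\<Sum>\<beta>\<in>F'. (if \<beta> = \<beta>' then of_real s * \<beta> x else 0)) = of_real s * \<beta>' x"
      using fin F'_def by (simp add: sum.delta')
    finally show "v x + of_real s * \<beta>' x = (\<Sum>\<beta>\<in>F'. complex_of_real (r' \<beta>) * \<beta> x)" using F(3) unfolding V_def by simp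
  qed
  thus ?thesis unfolding real_span_def using fin sub by blast
qed

end

context GC begin

lemma rs_ht: assumes "v \<in> real_span C" shows "has_t v"
proof -
  obtain F r where F: "finite F" "F \<subseteq> C" "v = V F r" using rs_V assms by blast
  show ?thesis using V_ht[OF F(1,2)] F(3) by simp
qed

lemma a_fun: assumes v: "v \<in> real_span C" and z: "Re (c * rf v v) = 0" and b: "\<beta>' \<in> C"
  shows "c * rf v \<beta>' = 0"
proof -
  have tv: "has_t v" using rs_ht v by blast
  have tb: "has_t \<beta>'" using C_ht b by blast
  have bR: "\<beta>' \<in> real_span C" using C_rs b by blast
  define X where "X = g v \<beta>'"
  define Y where "Y = g \<beta>' \<beta>'"
  have cX: "c * rf v \<beta>' = of_real X" unfolding X_def using c_real_rs[OF v bR] .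
  have Yp: "Y > 0" unfolding Y_def using C_pos b by blast
  have ineq: "0 \<le> 2 * s * X + s^2 * Y" for s
  proof -
    define w where "w = (\<lambda>x. 1 * v x + of_real s * \<beta>' x)"
    have wR: "w \<in> real_span C" unfolding w_def using rs_add[OF v b, of s] by simp
    have tw: "has_t w" unfolding w_def by (rule has_t_lin[OF tv tb])
    have "rf w w = 1 * rf v w + of_real s * rf \<beta>' w" unfolding w_def by (rule rf_lin1[OF tv tb tw[unfolded w_def]])
    also have "rf v w = 1 * rf v v + of_real s * rf v \<beta>'"
      unfolding w_def using rf_lin1[OF tv tb tv] rf_sym by metis
    also have "rf \<beta>' w = 1 * rf \<beta>' v + of_real s * rf \<beta>' \<beta>'"
      unfolding w_def using rf_lin1[OF tv tb tb] rf_sym by metis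
    finally have "c * rf w w = c * rf v v + 2 * of_real s * (c * rf v \<beta>') + (of_real s)^2 * (c * rf \<beta>' \<beta>')"
      using rf_sym[of \<beta>' v] by (simp add: algebra_simps power2_eq_square)
    hence "Re (c * rf w w) = Re (c * rf v v) + 2 * s * X + s^2 * Y"
      using cX C_pos[OF b] unfolding Y_def by (simp add: power2_eq_square)
    thus ?thesis using psd_fun[OF wR] z by simp
  qed
  have "0 \<le> 2 * (- X / Y) * X + (- X / Y)^2 * Y" by (rule ineq)
  also have "\<dots> = - (X^2 / Y)" using Yp by (simp add: field_simps power2_eq_square)
  finally have "X^2 / Y \<le> 0" by simp
  hence "X^2 \<le> 0" using Yp by (simp add: divide_le_0_iff)
  hence "X = 0" by simp
  thus ?thesis using cX by simp
qed

lemma b_fun: assumes v: "v \<in> real_span C" and z: "Re (c * rf v v) = 0" and d: "\<delta> \<in> R" "rf \<delta> \<delta> = 0"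
  shows "rf \<delta> v = 0"
proof -
  obtain F r where F: "finite F" "F \<subseteq> C" "v = V F r" using rs_V v by blast
  have ht: "\<forall>\<beta>\<in>F. has_t \<beta>" using F C_ht by blast
  have rows: "\<forall>\<beta>'\<in>F. (\<Sum>\<beta>\<in>F. r \<beta> * g \<beta> \<beta>') = 0"
  proof
    fix \<beta>' assume b: "\<beta>' \<in> F"
    hence bC: "\<beta>' \<in> C" using F by blast
    have "c * rf v \<beta>' = c * (\<Sum>\<beta>\<in>F. of_real (r \<beta>) * rf \<beta> \<beta>')"
      using F(3) rf_sum1[OF F(1) ht C_ht[OF bC]] unfolding V_def by simp
    also have "\<dots> = (\<Sum>\<beta>\<in>F. of_real (r \<beta>) * (c * rf \<beta> \<beta>'))" by (simp add: sum_distrib_left mult_ac)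
    also have "\<dots> = (\<Sum>\<beta>\<in>F. of_real (r \<beta> * g \<beta> \<beta>'))"
    proof (rule sum.cong[OF refl])
      fix \<beta> assume "\<beta> \<in> F"
      hence "c * rf \<beta> \<beta>' = of_real (g \<beta> \<beta>')" using c_real_C F(2) bC by blast
      thus "of_real (r \<beta>) * (c * rf \<beta> \<beta>') = of_real (r \<beta> * g \<beta> \<beta>')" by simp
    qed
    finally have e1: "c * rf v \<beta>' = of_real (\<Sum>\<beta>\<in>F. r \<beta> * g \<beta> \<beta>')" by (simp only: of_real_sum)
    have e2: "c * rf v \<beta>' = 0" by (rule a_fun[OF v z bC])
    have "(of_real (\<Sum>\<beta>\<in>F. r \<beta> * g \<beta> \<beta>') :: complex) = 0" using e1 e2 by (simp only:)
    thus "(\<Sum>\<beta>\<in>F. r \<beta> * g \<beta> \<beta>') = 0" by (simp only: of_real_eq_0_iff)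
  qed
  have "c * rf \<delta> v = c * (\<Sum>\<beta>\<in>F. of_real (r \<beta>) * rf \<delta> \<beta>)"
    using F(3) rf_sum2[OF F(1) ht root_has_t[OF d(1)]] unfolding V_def by simp
  also have "\<dots> = (\<Sum>\<beta>\<in>F. of_real (r \<beta>) * (c * rf \<delta> \<beta>))" by (simp add: sum_distrib_left mult_ac)
  also have "\<dots> = 0" by (rule iso_coef[OF F(1,2) d rows])
  finally show ?thesis using c_nz by simp
qed

lemma main:
  shows "(\<forall>v\<in>real_span C. v \<notin> radical sc br B H \<longrightarrow> 0 < Re (c * rf v v))
       \<and> (\<forall>v\<in>real_span C. 0 \<le> Re (c * rf v v))"
proof (intro conjI ballI impI)
  fix v assume "v \<in> real_span C" thus "0 \<le> Re (c * rf v v)" by (rule psd_fun)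
next
  fix v assume v: "v \<in> real_span C" and nr: "v \<notin> radical sc br B H"
  show "0 < Re (c * rf v v)"
  proof (rule ccontr)
    assume "\<not> 0 < Re (c * rf v v)"
    hence z: "Re (c * rf v v) = 0" using psd_fun[OF v] by simp
    obtain F r where F: "finite F" "F \<subseteq> C" "v = V F r" using rs_V v by blast
    have tv: "has_t v" using rs_ht v by blast
    have vR: "v \<in> real_span R"
    proof -
      have "F \<subseteq> R" using F(2) C_R by blast
      thus ?thesis using F(1,3) unfolding real_span_def V_def by blast
    qed
    have each: "rf v \<beta> = 0" if b: "\<beta> \<in> R" for \<beta>
    proof (cases "rf \<beta> \<beta> = 0")
      case True
      have "rf \<beta> v = 0" by (rule b_fun[OF v z b True])
      thus ?thesis using rf_sym by metis
    next
      case False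
      hence bRx: "\<beta> \<in> Rx" using b Rx_iff by blast
      show ?thesis
      proof (cases "\<beta> \<in> C")
        case True
        have "c * rf v \<beta> = 0" by (rule a_fun[OF v z True])
        thus ?thesis using c_nz by simp
      next
        case nC: False
        have ht: "\<forall>\<beta>\<in>F. has_t \<beta>" using F C_ht by blast
        have z0: "rf \<beta>'' \<beta> = 0" if "\<beta>'' \<in> F" for \<beta>''
        proof (rule ccontr)
          assume "rf \<beta>'' \<beta> \<noteq> 0"
          hence "\<beta> \<in> C" using C_link[OF _ bRx] that F(2) by blast
          thus False using nC by blast
        qed
        have "rf v \<beta> = (\<Sum>\<beta>''\<in>F. of_real (r \<beta>'') * rf \<beta>'' \<beta>)"
          using F(3) rf_sum1[OF F(1) ht root_has_t[OF b]] unfolding V_def by simp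
        also have "\<dots> = 0" using z0 by simp
        finally show ?thesis .
      qed
    qed
    have "\<forall>w\<in>real_span R. rf v w = 0"
    proof
      fix w assume "w \<in> real_span R"
      then obtain F2 d where F2: "finite F2" "F2 \<subseteq> R" "w = (\<lambda>x. \<Sum>\<beta>\<in>F2. complex_of_real (d \<beta>) * \<beta> x)"
        unfolding real_span_def by blast
      have ht2: "\<forall>\<beta>\<in>F2. has_t \<beta>" using F2 root_has_t by blast
      have "rf v w = (\<Sum>\<beta>\<in>F2. of_real (d \<beta>) * rf v \<beta>)" using F2(3) rf_sum2[OF F2(1) ht2 tv] by simp
      also have "\<dots> = 0" using each F2(2) by (simp add: subset_iff)
      finally show "rf v w = 0" .
    qed
    hence "v \<in> radical sc br B H" using vR unfolding radical_def by blast
    thus False using nr by blast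
  qed
qed

end

theorem lemma1p8:
  fixes sc :: "complex \<Rightarrow> 'g::ab_group_add \<Rightarrow> 'g"
    and br :: "'g \<Rightarrow> 'g \<Rightarrow> 'g"
    and B :: "'g \<Rightarrow> 'g \<Rightarrow> complex"
    and H :: "'g set"
    and \<alpha>0 :: "'g \<Rightarrow> complex"
    and c :: complex
  assumes grla: "grla sc br B H"
    and \<alpha>0: "\<alpha>0 \<in> nonisotropic_roots sc br B H"
    and c_nz: "c \<noteq> 0"
    and c_real: "\<forall>u\<in>real_span (root_class sc br B H \<alpha>0).
                   \<forall>v\<in>real_span (root_class sc br B H \<alpha>0). c * rform B H u v \<in> \<real>"
    and c_pos: "\<exists>\<gamma>\<in>root_class sc br B H \<alpha>0. 0 < Re (c * rform B H \<gamma> \<gamma>)"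
  shows "(\<forall>v\<in>real_span (root_class sc br B H \<alpha>0).
            v \<notin> radical sc br B H \<longrightarrow> 0 < Re (c * rform B H v v))
       \<and> (\<forall>v\<in>real_span (root_class sc br B H \<alpha>0). 0 \<le> Re (c * rform B H v v))"
proof -
  interpret GC sc br B H \<alpha>0 c
    by (unfold_locales) (fact grla \<alpha>0 c_nz c_real c_pos)+
  show ?thesis by (rule main)
qed

end
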